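(* Let $E$ be an arbitrary graph, $X\subseteq{\rm Reg}(E)$ and $Y={\rm Reg}(E)\setminus X$. Let $A$ be a $\mathbb Z$-graded ring and $\pi:C_K^X(E)\to A$ a graded ring homomorphism such that $\pi(u)\ne0$ for every $u\in E^0$ and $\pi\big(v-\sum_{e\in s^{-1}(v)}ee^*\big)\ne0$ for every $v\in Y$. Then $\pi$ is injective.
   Context: Let $K$ be a field and $E=(E^0,E^1,r,s)$ a directed graph (no countability or finiteness assumptions). A vertex $v$ is regular if $s^{-1}(v)$ is finite and nonempty; ${\rm Reg}(E)$ is the set of regular vertices. Paths are finite sequences of edges $\xi_1\cdots\xi_n$ with $r(\xi_i)=s(\xi_{i+1})$ (vertices are paths of length 0); for a path $\alpha=\alpha_1\cdots\alpha_n$, $\alpha^*=\alpha_n^*\cdots\alpha_1^*$. For $X\subseteq{\rm Reg}(E)$, the relative Cohn path algebra $C_K^X(E)$ is the free $K$-algebra generated by $E^0\cup E^1\cup\{e^*:e\in E^1\}$ subject to: $vw=\delta_{v,w}v$; $s(e)e=er(e)=e$ and $r(e)e^*=e^*s(e)=e^*$; $e^*f=\delta_{e,f}r(e)$; $v=\sum_{e\in s^{-1}(v)}ee^*$ for every $v\in X$. It is $\mathbb Z$-graded with degree-$n$ component spanned by the elements $\alpha\beta^*$ ($\alpha,\beta$ paths, $r(\alpha)=r(\beta)$) with $|\alpha|-|\beta|=n$. *)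

theory Defs
  imports Main
begin

text \<open>Generators of the free algebra: vertices, edges, ghost edges.\<close>
datatype ('v,'e) cgen = Vx 'v | Ed 'e | Gh 'e

text \<open>Noncommutative polynomials over 'k in the generators: coefficient functions
  on words (finitely supported elements are selected by cohn_free below).\<close>
type_synonym ('k,'v,'e) fpoly = "('v,'e) cgen list \<Rightarrow> 'k"

definition pzero :: "('k::field,'v,'e) fpoly" where
  "pzero = (\<lambda>w. 0)"

definition padd :: "('k::field,'v,'e) fpoly \<Rightarrow> ('k,'v,'e) fpoly \<Rightarrow> ('k,'v,'e) fpoly" where
  "padd p q = (\<lambda>w. p w + q w)"

definition psub :: "('k::field,'v,'e) fpoly \<Rightarrow> ('k,'v,'e) fpoly \<Rightarrow> ('k,'v,'e) fpoly" where
  "psub p q = (\<lambda>w. p w - q w)"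

definition psmul :: "'k::field \<Rightarrow> ('k,'v,'e) fpoly \<Rightarrow> ('k,'v,'e) fpoly" where
  "psmul c p = (\<lambda>w. c * p w)"

definition pmul :: "('k::field,'v,'e) fpoly \<Rightarrow> ('k,'v,'e) fpoly \<Rightarrow> ('k,'v,'e) fpoly" where
  "pmul p q = (\<lambda>w. \<Sum>i\<in>{0..length w}. p (take i w) * q (drop i w))"

definition mon :: "('v,'e) cgen list \<Rightarrow> ('k::field,'v,'e) fpoly" where
  "mon u = (\<lambda>w. if w = u then 1 else 0)"

definition psum :: "('i \<Rightarrow> ('k::field,'v,'e) fpoly) \<Rightarrow> 'i set \<Rightarrow> ('k,'v,'e) fpoly" where
  "psum f S = (\<lambda>w. \<Sum>i\<in>S. f i w)"

definition cgraph :: "'v set \<Rightarrow> 'e set \<Rightarrow> ('e \<Rightarrow> 'v) \<Rightarrow> ('e \<Rightarrow> 'v) \<Rightarrow> bool" where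
  "cgraph E0 E1 s r \<longleftrightarrow> (\<forall>e\<in>E1. s e \<in> E0 \<and> r e \<in> E0)"

definition reg_vertices :: "'v set \<Rightarrow> 'e set \<Rightarrow> ('e \<Rightarrow> 'v) \<Rightarrow> 'v set" where
  "reg_vertices E0 E1 s =
     {v\<in>E0. finite {e\<in>E1. s e = v} \<and> {e\<in>E1. s e = v} \<noteq> {}}"

definition gens :: "'v set \<Rightarrow> 'e set \<Rightarrow> ('v,'e) cgen set" where
  "gens E0 E1 = Vx ` E0 \<union> Ed ` E1 \<union> Gh ` E1"

text \<open>The free (non-unital) K-algebra on E0 \<union> E1 \<union> E1*: finitely supported
  polynomials in nonempty words over the generators.\<close>
definition cohn_free :: "'v set \<Rightarrow> 'e set \<Rightarrow> ('k::field,'v,'e) fpoly set" where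
  "cohn_free E0 E1 =
     {p. finite {w. p w \<noteq> 0} \<and> (\<forall>w. p w \<noteq> 0 \<longrightarrow> w \<noteq> [] \<and> set w \<subseteq> gens E0 E1)}"

definition gap_elt :: "'e set \<Rightarrow> ('e \<Rightarrow> 'v) \<Rightarrow> 'v \<Rightarrow> ('k::field,'v,'e) fpoly" where
  "gap_elt E1 s v = psub (mon [Vx v]) (psum (\<lambda>e. mon [Ed e, Gh e]) {e\<in>E1. s e = v})"

definition cohn_rels :: "'v set \<Rightarrow> 'e set \<Rightarrow> ('e \<Rightarrow> 'v) \<Rightarrow> ('e \<Rightarrow> 'v) \<Rightarrow> 'v set
    \<Rightarrow> ('k::field,'v,'e) fpoly set" where
  "cohn_rels E0 E1 s r X =
     {psub (mon [Vx v, Vx w]) (if v = w then mon [Vx v] else pzero) | v w. v \<in> E0 \<and> w \<in> E0}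
   \<union> {psub (mon [Vx (s e), Ed e]) (mon [Ed e]) | e. e \<in> E1}
   \<union> {psub (mon [Ed e, Vx (r e)]) (mon [Ed e]) | e. e \<in> E1}
   \<union> {psub (mon [Vx (r e), Gh e]) (mon [Gh e]) | e. e \<in> E1}
   \<union> {psub (mon [Gh e, Vx (s e)]) (mon [Gh e]) | e. e \<in> E1}
   \<union> {psub (mon [Gh e, Ed f]) (if e = f then mon [Vx (r e)] else pzero) | e f. e \<in> E1 \<and> f \<in> E1}
   \<union> {gap_elt E1 s v | v. v \<in> X}"

text \<open>The two-sided (K-algebra) ideal generated by the relations; C_K^X(E) is
  cohn_free modulo this ideal.\<close>
inductive_set cohn_ideal :: "'v set \<Rightarrow> 'e set \<Rightarrow> ('e \<Rightarrow> 'v) \<Rightarrow> ('e \<Rightarrow> 'v) \<Rightarrow> 'v set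
    \<Rightarrow> ('k::field,'v,'e) fpoly set"
  for E0 E1 s r X where
  zero: "pzero \<in> cohn_ideal E0 E1 s r X"
| gen: "\<lbrakk>q \<in> cohn_rels E0 E1 s r X; set u \<subseteq> gens E0 E1; set w \<subseteq> gens E0 E1\<rbrakk>
        \<Longrightarrow> pmul (pmul (mon u) q) (mon w) \<in> cohn_ideal E0 E1 s r X"
| add: "\<lbrakk>p \<in> cohn_ideal E0 E1 s r X; q \<in> cohn_ideal E0 E1 s r X\<rbrakk>
        \<Longrightarrow> padd p q \<in> cohn_ideal E0 E1 s r X"
| smul: "p \<in> cohn_ideal E0 E1 s r X \<Longrightarrow> psmul c p \<in> cohn_ideal E0 E1 s r X"

fun gdeg :: "('v,'e) cgen \<Rightarrow> int" where
  "gdeg (Vx v) = 0" | "gdeg (Ed e) = 1" | "gdeg (Gh e) = -1"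

definition wdeg :: "('v,'e) cgen list \<Rightarrow> int" where
  "wdeg w = sum_list (map gdeg w)"

definition homogeneous :: "int \<Rightarrow> ('k::field,'v,'e) fpoly \<Rightarrow> bool" where
  "homogeneous n p \<longleftrightarrow> (\<forall>w. p w \<noteq> 0 \<longrightarrow> wdeg w = n)"

definition graded_ring :: "(int \<Rightarrow> 'a::ring set) \<Rightarrow> bool" where
  "graded_ring Agr \<longleftrightarrow>
     (\<forall>n. 0 \<in> Agr n \<and> (\<forall>x\<in>Agr n. \<forall>y\<in>Agr n. x + y \<in> Agr n \<and> - x \<in> Agr n)) \<and>
     (\<forall>m n. \<forall>x\<in>Agr m. \<forall>y\<in>Agr n. x * y \<in> Agr (m + n)) \<and>
     (\<forall>x. \<exists>S c. finite S \<and> (\<forall>n. c n \<in> Agr n) \<and> x = (\<Sum>n\<in>S. c n)) \<and>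
     (\<forall>S c. finite S \<longrightarrow> (\<forall>n\<in>S. c n \<in> Agr n) \<longrightarrow> (\<Sum>n\<in>S. c n) = 0 \<longrightarrow> (\<forall>n\<in>S. c n = 0))"

end

theory Submission
  imports Defs
begin

lemma take_len_le: "take (length u) w = u \<Longrightarrow> length u \<le> length w"
proof (induction w arbitrary: u)
  case Nil then show ?case by simp
next
  case (Cons a w) then show ?case by (cases u) auto
qed

lemma pmul_mon_left:
  "pmul (mon u) p w = (if take (length u) w = u then p (drop (length u) w) else 0)"
proof -
  have "pmul (mon u) p w = (\<Sum>i\<in>{0..length w}. if i = length u then (if take (length u) w = u then p (drop (length u) w) else 0) else 0)"
    unfolding pmul_def mon_def
    by (rule sum.cong) (auto simp: min_def split: if_splits)
  also have "\<dots> = (if take (length u) w = u then p (drop (length u) w) else 0)"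
  proof (cases "take (length u) w = u")
    case True
    from True have "length u \<le> length w" by (rule take_len_le)
    then show ?thesis using True by (simp add: sum.delta)
  qed simp
  finally show ?thesis .
qed

lemma pmul_mon_right:
  "pmul p (mon u) w = (if length u \<le> length w \<and> drop (length w - length u) w = u then p (take (length w - length u) w) else 0)"
proof -
  have "pmul p (mon u) w = (\<Sum>i\<in>{0..length w}. if i = length w - length u then (if length u \<le> length w \<and> drop (length w - length u) w = u then p (take (length w - length u) w) else 0) else 0)"
    unfolding pmul_def mon_def
    by (rule sum.cong) auto
  also have "\<dots> = (if length u \<le> length w \<and> drop (length w - length u) w = u then p (take (length w - length u) w) else 0)"
    by (simp add: sum.delta)
  finally show ?thesis .
qed

lemma mon_mul: "pmul (mon u) (mon w) = mon (u @ w)"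
  by (rule ext) (simp only: pmul_mon_left, auto simp: mon_def, metis append_take_drop_id)

lemma pmul_assoc_left:
  fixes x y :: "('k::field,'v,'e) fpoly"
  shows "pmul (pmul (mon a) x) y = pmul (mon a) (pmul x y)"
proof (rule ext)
  fix w :: "('v,'e) cgen list"
  let ?n = "length a"
  show "pmul (pmul (mon a) x) y w = pmul (mon a) (pmul x y) w"
  proof (cases "take ?n w = a")
    case False
    have "pmul (pmul (mon a) x) y w = (\<Sum>i\<in>{0..length w}. 0)"
      unfolding pmul_def[of "pmul (mon a) x"]
      apply (rule sum.cong[OF refl])
      using False by (auto simp: pmul_mon_left min_def split: if_splits)
    then show ?thesis using False by (simp add: pmul_mon_left)
  next
    case True
    from True have le: "?n \<le> length w" by (rule take_len_le)
    have "pmul (pmul (mon a) x) y w = (\<Sum>i\<in>{?n..length w}. x (drop ?n (take i w)) * y (drop i w))"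
      unfolding pmul_def[of "pmul (mon a) x"]
      apply (rule sum.mono_neutral_cong_right)
      using True by (auto simp: pmul_mon_left min_def take_take split: if_splits)
    also have "\<dots> = (\<Sum>j\<in>{0..length w - ?n}. x (drop ?n (take (j + ?n) w)) * y (drop (j + ?n) w))"
      using sum.shift_bounds_cl_nat_ivl[of "\<lambda>i. x (drop ?n (take i w)) * y (drop i w)" 0 ?n "length w - ?n"] le
      by simp
    also have "\<dots> = pmul x y (drop ?n w)"
      unfolding pmul_def
      by (rule sum.cong) (auto simp: drop_take add.commute)
    finally show ?thesis using True by (simp add: pmul_mon_left)
  qed
qed

lemma pmul_assoc_right:
  fixes x y :: "('k::field,'v,'e) fpoly"
  shows "pmul (pmul x y) (mon b) = pmul x (pmul y (mon b))"
proof (rule ext)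
  fix w :: "('v,'e) cgen list"
  let ?m = "length w - length b"
  show "pmul (pmul x y) (mon b) w = pmul x (pmul y (mon b)) w"
  proof (cases "length b \<le> length w \<and> drop ?m w = b")
    case False
    have "pmul x (pmul y (mon b)) w = (\<Sum>i\<in>{0..length w}. 0)"
      unfolding pmul_def[of x]
      apply (rule sum.cong[OF refl])
      using False by (auto simp: pmul_mon_right)
    then have "pmul x (pmul y (mon b)) w = 0" by simp
    then show ?thesis using False by (simp add: pmul_mon_right[of "pmul x y"]; blast)
  next
    case True
    have "pmul x (pmul y (mon b)) w = (\<Sum>i\<in>{0..?m}. x (take i w) * y (take (?m - i) (drop i w)))"
      unfolding pmul_def[of x]
      apply (rule sum.mono_neutral_cong_right)
      using True by (auto simp: pmul_mon_right add.commute)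
    also have "\<dots> = pmul x y (take ?m w)"
      unfolding pmul_def
      by (rule sum.cong) (auto simp: drop_take min_def split: if_splits)
    finally show ?thesis using True by (simp add: pmul_mon_right)
  qed
qed

lemma pmul_psmul_left: "pmul (psmul a p) q = psmul a (pmul p q)"
  by (rule ext) (simp add: pmul_def psmul_def sum_distrib_left mult.assoc)
lemma pmul_psmul_right: "pmul p (psmul a q) = psmul a (pmul p q)"
  by (rule ext) (simp add: pmul_def psmul_def sum_distrib_left mult.left_commute)
lemma pmul_padd_left: "pmul (padd p q) r = padd (pmul p r) (pmul q r)"
  by (rule ext) (simp add: pmul_def padd_def sum.distrib distrib_right)
lemma pmul_padd_right: "pmul r (padd p q) = padd (pmul r p) (pmul r q)"
  by (rule ext) (simp add: pmul_def padd_def sum.distrib distrib_left)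
lemma pmul_psub_left: "pmul (psub p q) r = psub (pmul p r) (pmul q r)"
  by (rule ext) (simp add: pmul_def psub_def sum_subtractf left_diff_distrib)
lemma pmul_psub_right: "pmul r (psub p q) = psub (pmul r p) (pmul r q)"
  by (rule ext) (simp add: pmul_def psub_def sum_subtractf right_diff_distrib)
lemma pmul_psum_left: "pmul (psum f S) q = psum (\<lambda>i. pmul (f i) q) S"
  unfolding pmul_def psum_def by (rule ext) (simp add: sum_distrib_right, rule sum.swap)
lemma pmul_psum_right: "pmul q (psum f S) = psum (\<lambda>i. pmul q (f i)) S"
  unfolding pmul_def psum_def by (rule ext) (simp add: sum_distrib_left, rule sum.swap)
lemma pmul_pzero_left: "pmul pzero q = pzero"
  by (rule ext) (simp add: pmul_def pzero_def)
lemma pmul_pzero_right: "pmul q pzero = pzero"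
  by (rule ext) (simp add: pmul_def pzero_def)
lemma psmul_zero[simp]: "psmul 0 p = pzero"
  by (rule ext) (simp add: psmul_def pzero_def)
lemma psmul_one[simp]: "psmul 1 p = p"
  by (rule ext) (simp add: psmul_def)
lemma psmul_psmul: "psmul a (psmul b p) = psmul (a*b) p"
  by (rule ext) (simp add: psmul_def)
lemma psmul_pzero[simp]: "psmul a pzero = pzero"
  by (rule ext) (simp add: psmul_def pzero_def)
lemma psum_empty[simp]: "psum f {} = pzero"
  by (rule ext) (simp add: psum_def pzero_def)
lemma psum_insert: "finite S \<Longrightarrow> x \<notin> S \<Longrightarrow> psum f (insert x S) = padd (f x) (psum f S)"
  by (rule ext) (simp add: psum_def padd_def)
lemma mon_left_unit: "pmul (mon []) p = p"
  by (rule ext) (simp add: pmul_mon_left)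
lemma mon_right_unit: "pmul p (mon []) = p"
  by (rule ext) (simp add: pmul_mon_right)
lemma psum_psmul_mon: "finite {w. p w \<noteq> 0} \<Longrightarrow> psum (\<lambda>w. psmul (p w) (mon w)) {w. p w \<noteq> 0} = p"
  by (rule ext) (auto simp: psum_def psmul_def mon_def if_distrib sum.delta cong: if_cong)
lemma psum_apply: "psum f S w = (\<Sum>i\<in>S. f i w)" by (simp add: psum_def)
lemma padd_apply: "padd p q w = p w + q w" by (simp add: padd_def)
lemma psub_apply: "psub p q w = p w - q w" by (simp add: psub_def)
lemma psmul_apply: "psmul c q w = c * q w" by (simp add: psmul_def)
lemma mon_apply: "mon u w = (if w = u then 1 else 0)" by (simp add: mon_def)
lemma pzero_apply: "pzero w = 0" by (simp add: pzero_def)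

lemma free_iff: "p \<in> cohn_free E0 E1 \<longleftrightarrow> finite {w. p w \<noteq> 0} \<and> (\<forall>w. p w \<noteq> 0 \<longrightarrow> w \<noteq> [] \<and> set w \<subseteq> gens E0 E1)"
  by (simp add: cohn_free_def)

lemma free_pzero: "pzero \<in> cohn_free E0 E1"
  by (simp add: free_iff pzero_def)
lemma free_padd: "p \<in> cohn_free E0 E1 \<Longrightarrow> q \<in> cohn_free E0 E1 \<Longrightarrow> padd p q \<in> cohn_free E0 E1"
proof -
  assume a: "p \<in> cohn_free E0 E1" and b: "q \<in> cohn_free E0 E1"
  have sub: "{w. padd p q w \<noteq> 0} \<subseteq> {w. p w \<noteq> 0} \<union> {w. q w \<noteq> 0}" by (auto simp: padd_def)
  have "\<forall>w. padd p q w \<noteq> 0 \<longrightarrow> w \<noteq> [] \<and> set w \<subseteq> gens E0 E1" using sub a b unfolding free_iff by blast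
  moreover have "finite {w. padd p q w \<noteq> 0}" using sub a b unfolding free_iff by (auto intro: finite_subset)
  ultimately show ?thesis by (simp add: free_iff)
qed
lemma free_psmul: "p \<in> cohn_free E0 E1 \<Longrightarrow> psmul c p \<in> cohn_free E0 E1"
  unfolding free_iff psmul_def
  by (auto intro: finite_subset[of _ "{w. p w \<noteq> 0}"])
lemma free_psub: "p \<in> cohn_free E0 E1 \<Longrightarrow> q \<in> cohn_free E0 E1 \<Longrightarrow> psub p q \<in> cohn_free E0 E1"
proof -
  assume a: "p \<in> cohn_free E0 E1" and b: "q \<in> cohn_free E0 E1"
  have sub: "{w. psub p q w \<noteq> 0} \<subseteq> {w. p w \<noteq> 0} \<union> {w. q w \<noteq> 0}" by (auto simp: psub_def)
  have "\<forall>w. psub p q w \<noteq> 0 \<longrightarrow> w \<noteq> [] \<and> set w \<subseteq> gens E0 E1" using sub a b unfolding free_iff by blast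
  moreover have "finite {w. psub p q w \<noteq> 0}" using sub a b unfolding free_iff by (auto intro: finite_subset)
  ultimately show ?thesis by (simp add: free_iff)
qed

lemma free_mon: "w \<noteq> [] \<Longrightarrow> set w \<subseteq> gens E0 E1 \<Longrightarrow> mon w \<in> cohn_free E0 E1"
  unfolding free_iff mon_def by auto
lemma free_psum: "finite S \<Longrightarrow> (\<And>i. i \<in> S \<Longrightarrow> f i \<in> cohn_free E0 E1) \<Longrightarrow> psum f S \<in> cohn_free E0 E1"
  by (induction S rule: finite_induct) (auto simp: free_pzero psum_insert free_padd)

lemma free_pmul:
  assumes "p \<in> cohn_free E0 E1" "q \<in> cohn_free E0 E1"
  shows "pmul p q \<in> cohn_free E0 E1"
proof -
  have key: "\<exists>i. p (take i w) \<noteq> 0 \<and> q (drop i w) \<noteq> 0" if "pmul p q w \<noteq> 0" for w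
  proof (rule ccontr)
    assume "\<not> ?thesis"
    then have "pmul p q w = 0" unfolding pmul_def by (intro sum.neutral) auto
    with that show False by simp
  qed
  have "{w. pmul p q w \<noteq> 0} \<subseteq> (\<lambda>(a,b). a @ b) ` ({w. p w \<noteq> 0} \<times> {w. q w \<noteq> 0})"
  proof
    fix w assume "w \<in> {w. pmul p q w \<noteq> 0}"
    then obtain i where "p (take i w) \<noteq> 0" "q (drop i w) \<noteq> 0" using key by blast
    then show "w \<in> (\<lambda>(a,b). a @ b) ` ({w. p w \<noteq> 0} \<times> {w. q w \<noteq> 0})"
      by (intro image_eqI[of _ _ "(take i w, drop i w)"]) auto
  qed
  moreover have "finite ((\<lambda>(a,b). a @ b) ` ({w. p w \<noteq> 0} \<times> {w. q w \<noteq> 0}))"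
    using assms by (simp add: free_iff)
  ultimately have fin: "finite {w. pmul p q w \<noteq> 0}" by (rule finite_subset)
  have "w \<noteq> [] \<and> set w \<subseteq> gens E0 E1" if nz: "pmul p q w \<noteq> 0" for w
  proof -
    obtain i where i: "p (take i w) \<noteq> 0" "q (drop i w) \<noteq> 0" using key nz by blast
    then have "take i w \<noteq> []" "set (take i w) \<subseteq> gens E0 E1" "set (drop i w) \<subseteq> gens E0 E1"
      using assms by (auto simp: free_iff)
    then show ?thesis by (metis append_take_drop_id le_sup_iff set_append take_Nil)
  qed
  with fin show ?thesis by (simp add: free_iff)
qed

locale cg =
  fixes E0 :: "'v set" and E1 :: "'e set" and s r :: "'e \<Rightarrow> 'v" and X :: "'v set"
begin

abbreviation II :: "('k::field,'v,'e) fpoly set" where "II \<equiv> cohn_ideal E0 E1 s r X"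
abbreviation FF :: "('k::field,'v,'e) fpoly set" where "FF \<equiv> cohn_free E0 E1"
abbreviation GG where "GG \<equiv> gens E0 E1"
abbreviation eqv :: "('k::field,'v,'e) fpoly \<Rightarrow> ('k,'v,'e) fpoly \<Rightarrow> bool" where
  "eqv p q \<equiv> psub p q \<in> II"

lemma I_psub: "p \<in> II \<Longrightarrow> q \<in> II \<Longrightarrow> psub p q \<in> II"
proof -
  assume "p \<in> II" "q \<in> II"
  moreover have "psub p q = padd p (psmul (-1) q)" by (rule ext) (simp add: psub_def padd_def psmul_def)
  ultimately show ?thesis by (simp add: cohn_ideal.add cohn_ideal.smul)
qed

lemma I_psum: "finite S \<Longrightarrow> (\<And>i. i \<in> S \<Longrightarrow> f i \<in> II) \<Longrightarrow> psum f S \<in> II"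
  by (induction S rule: finite_induct) (simp_all add: psum_insert cohn_ideal.zero cohn_ideal.add)

lemma I_left: "p \<in> II \<Longrightarrow> set a \<subseteq> GG \<Longrightarrow> pmul (mon a) p \<in> II"
proof (induction rule: cohn_ideal.induct)
  case zero then show ?case by (simp add: pmul_pzero_right cohn_ideal.zero)
next
  case (gen q u w)
  have "pmul (mon a) (pmul (pmul (mon u) q) (mon w)) = pmul (pmul (mon a) (pmul (mon u) q)) (mon w)"
    by (rule pmul_assoc_left[symmetric])
  also have "pmul (mon a) (pmul (mon u) q) = pmul (mon (a @ u)) q"
    by (simp only: pmul_assoc_left[symmetric] mon_mul)
  finally have "pmul (mon a) (pmul (pmul (mon u) q) (mon w)) = pmul (pmul (mon (a @ u)) q) (mon w)" .
  moreover have "pmul (pmul (mon (a @ u)) q) (mon w) \<in> II" using gen by (intro cohn_ideal.gen) auto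
  ultimately show ?case by simp
next
  case (add p q) then show ?case by (simp add: pmul_padd_right cohn_ideal.add)
next
  case (smul p c) then show ?case by (simp add: pmul_psmul_right cohn_ideal.smul)
qed

lemma I_right: "p \<in> II \<Longrightarrow> set a \<subseteq> GG \<Longrightarrow> pmul p (mon a) \<in> II"
proof (induction rule: cohn_ideal.induct)
  case zero then show ?case by (simp add: pmul_pzero_left cohn_ideal.zero)
next
  case (gen q u w)
  have "pmul (pmul (pmul (mon u) q) (mon w)) (mon a) = pmul (pmul (mon u) q) (pmul (mon w) (mon a))"
    by (rule pmul_assoc_right)
  then have "pmul (pmul (pmul (mon u) q) (mon w)) (mon a) = pmul (pmul (mon u) q) (mon (w @ a))"
    by (simp only: mon_mul)
  moreover have "pmul (pmul (mon u) q) (mon (w @ a)) \<in> II" using gen by (intro cohn_ideal.gen) auto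
  ultimately show ?case by simp
next
  case (add p q) then show ?case by (simp add: pmul_padd_left cohn_ideal.add)
next
  case (smul p c) then show ?case by (simp add: pmul_psmul_left cohn_ideal.smul)
qed

lemma I_ctx: "p \<in> II \<Longrightarrow> set u \<subseteq> GG \<Longrightarrow> set v \<subseteq> GG \<Longrightarrow> pmul (pmul (mon u) p) (mon v) \<in> II"
  by (intro I_right I_left)

lemma rel_I: "q \<in> cohn_rels E0 E1 s r X \<Longrightarrow> q \<in> II"
  using cohn_ideal.gen[of q E0 E1 s r X "[]" "[]"] by (simp add: mon_left_unit mon_right_unit)

lemma eqv_refl: "eqv p p"
proof -
  have "psub p p = pzero" by (rule ext) (simp add: psub_def pzero_def)
  then show ?thesis by (simp add: cohn_ideal.zero)
qed

lemma eqv_sym: "eqv p q \<Longrightarrow> eqv q p"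
proof -
  assume "eqv p q"
  moreover have "psub q p = psmul (-1) (psub p q)" by (rule ext) (simp add: psub_def psmul_def)
  ultimately show ?thesis by (simp add: cohn_ideal.smul)
qed

lemma eqv_trans: "eqv p q \<Longrightarrow> eqv q t \<Longrightarrow> eqv p t"
proof -
  assume "eqv p q" "eqv q t"
  moreover have "psub p t = padd (psub p q) (psub q t)" by (rule ext) (simp add: psub_def padd_def)
  ultimately show ?thesis by (simp add: cohn_ideal.add)
qed

lemma eqv_zero_I: "eqv p pzero \<longleftrightarrow> p \<in> II"
proof -
  have "psub p pzero = p" by (rule ext) (simp add: psub_def pzero_def)
  then show ?thesis by simp
qed

lemma eqv_psmul: "eqv p q \<Longrightarrow> eqv (psmul c p) (psmul c q)"
proof -
  assume "eqv p q"
  moreover have "psub (psmul c p) (psmul c q) = psmul c (psub p q)" by (rule ext) (simp add: psub_def psmul_def algebra_simps)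
  ultimately show ?thesis by (simp add: cohn_ideal.smul)
qed

lemma eqv_padd: "eqv p q \<Longrightarrow> eqv p' q' \<Longrightarrow> eqv (padd p p') (padd q q')"
proof -
  assume "eqv p q" "eqv p' q'"
  moreover have "psub (padd p p') (padd q q') = padd (psub p q) (psub p' q')" by (rule ext) (simp add: psub_def padd_def)
  ultimately show ?thesis by (simp add: cohn_ideal.add)
qed

lemma eqv_psum: "finite S \<Longrightarrow> (\<And>i. i \<in> S \<Longrightarrow> eqv (f i) (g i)) \<Longrightarrow> eqv (psum f S) (psum g S)"
proof -
  assume "finite S" "\<And>i. i \<in> S \<Longrightarrow> eqv (f i) (g i)"
  moreover have "psub (psum f S) (psum g S) = psum (\<lambda>i. psub (f i) (g i)) S"
    by (rule ext) (simp add: psub_def psum_def sum_subtractf)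
  ultimately show ?thesis by (simp add: I_psum)
qed

lemma eqv_ctx: "eqv p q \<Longrightarrow> set u \<subseteq> GG \<Longrightarrow> set v \<subseteq> GG \<Longrightarrow>
   eqv (pmul (pmul (mon u) p) (mon v)) (pmul (pmul (mon u) q) (mon v))"
  using I_ctx[of "psub p q" u v] by (simp add: pmul_psub_left pmul_psub_right)

lemma eqv_mon_ctx: assumes "eqv (mon x :: ('k::field,'v,'e) fpoly) (mon y)" "set u \<subseteq> GG" "set v \<subseteq> GG"
  shows "eqv (mon (u @ x @ v) :: ('k,'v,'e) fpoly) (mon (u @ y @ v))"
  using eqv_ctx[OF assms] by (simp only: mon_mul append_assoc)

lemma I_mon_ctx: assumes "(mon x :: ('k::field,'v,'e) fpoly) \<in> II" "set u \<subseteq> GG" "set v \<subseteq> GG" shows "(mon (u @ x @ v) :: ('k,'v,'e) fpoly) \<in> II"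
  using I_ctx[OF assms] by (simp only: mon_mul append_assoc)

lemma eqv_mon_ctx0: "eqv (mon x :: ('k::field,'v,'e) fpoly) pzero \<Longrightarrow> set u \<subseteq> GG \<Longrightarrow> set v \<subseteq> GG \<Longrightarrow>
   eqv (mon (u @ x @ v) :: ('k,'v,'e) fpoly) pzero"
  unfolding eqv_zero_I by (rule I_mon_ctx)

end

definition nw :: "'e list \<Rightarrow> 'v \<Rightarrow> 'e list \<Rightarrow> ('v,'e) cgen list" where
  "nw a v b = map Ed a @ Vx v # map Gh (rev b)"

fun pto :: "'e set \<Rightarrow> ('e \<Rightarrow> 'v) \<Rightarrow> ('e \<Rightarrow> 'v) \<Rightarrow> 'e list \<Rightarrow> 'v \<Rightarrow> bool" where
  "pto E1 s r [] v = True"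
| "pto E1 s r (e # a) v = (e \<in> E1 \<and> (case a of [] \<Rightarrow> r e = v | f # _ \<Rightarrow> r e = s f) \<and> pto E1 s r a v)"

lemma pto_snoc: "pto E1 s r (b @ [e]) u \<longleftrightarrow> pto E1 s r b (s e) \<and> e \<in> E1 \<and> r e = u"
  by (induction b) (auto split: list.splits)

lemma pto_E1: "pto E1 s r a v \<Longrightarrow> set a \<subseteq> E1"
  by (induction a) auto

lemma wdeg_Nil[simp]: "wdeg [] = 0" by (simp add: wdeg_def)
lemma wdeg_Cons[simp]: "wdeg (g # w) = gdeg g + wdeg w" by (simp add: wdeg_def)
lemma wdeg_append[simp]: "wdeg (u @ w) = wdeg u + wdeg w" by (simp add: wdeg_def)
lemma wdeg_Ed[simp]: "wdeg (map Ed a) = int (length a)" by (induction a) auto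
lemma wdeg_Gh[simp]: "wdeg (map Gh a) = - int (length a)" by (induction a) auto
lemma wdeg_nw: "wdeg (nw a v b) = int (length a) - int (length b)" by (simp add: nw_def)

lemma gens_simps[simp]: "Vx x \<in> gens E0 E1 \<longleftrightarrow> x \<in> E0" "Ed e \<in> gens E0 E1 \<longleftrightarrow> e \<in> E1"
  "Gh e \<in> gens E0 E1 \<longleftrightarrow> e \<in> E1"
  by (auto simp: gens_def)

lemma set_Ed_gens: "set a \<subseteq> E1 \<Longrightarrow> set (map Ed a) \<subseteq> gens E0 E1" by auto
lemma set_Gh_gens: "set a \<subseteq> E1 \<Longrightarrow> set (map Gh a) \<subseteq> gens E0 E1" by auto

locale cgg = cg E0 E1 s r X
  for E0 :: "'v set" and E1 :: "'e set" and s r :: "'e \<Rightarrow> 'v" and X :: "'v set" +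
  fixes KK :: "'k::field itself"
  assumes graph: "cgraph E0 E1 s r"
begin

abbreviation M :: "('v,'e) cgen list \<Rightarrow> ('k,'v,'e) fpoly" where "M w \<equiv> mon w"
abbreviation Z :: "('k,'v,'e) fpoly" where "Z \<equiv> pzero"
abbreviation path where "path a v \<equiv> pto E1 s r a v"
definition vld :: "'e list \<Rightarrow> 'v \<Rightarrow> 'e list \<Rightarrow> bool" where
  "vld a v b \<longleftrightarrow> v \<in> E0 \<and> path a v \<and> path b v"

lemma sE0: "e \<in> E1 \<Longrightarrow> s e \<in> E0" and rE0: "e \<in> E1 \<Longrightarrow> r e \<in> E0"
  using graph by (auto simp: cgraph_def)

lemma set_nw: "vld a v b \<Longrightarrow> set (nw a v b) \<subseteq> GG"
  by (auto simp: vld_def nw_def dest!: pto_E1)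

lemma nw_ne: "nw a v b \<noteq> []" by (simp add: nw_def)

lemma eqv_I: "eqv p q \<Longrightarrow> q \<in> II \<Longrightarrow> p \<in> II"
proof -
  assume "eqv p q" "q \<in> II"
  moreover have "p = padd (psub p q) q" by (rule ext) (simp add: psub_def padd_def)
  ultimately show ?thesis by (metis cohn_ideal.add)
qed

lemma R_VV: "a \<in> E0 \<Longrightarrow> b \<in> E0 \<Longrightarrow> eqv (M [Vx a, Vx b]) (if a = b then M [Vx a] else Z)"
  by (rule rel_I) (unfold cohn_rels_def, blast)
lemma R_sE: "e \<in> E1 \<Longrightarrow> eqv (M [Vx (s e), Ed e]) (M [Ed e])"
  by (rule rel_I) (unfold cohn_rels_def, blast)
lemma R_Er: "e \<in> E1 \<Longrightarrow> eqv (M [Ed e, Vx (r e)]) (M [Ed e])"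
  by (rule rel_I) (unfold cohn_rels_def, blast)
lemma R_rG: "e \<in> E1 \<Longrightarrow> eqv (M [Vx (r e), Gh e]) (M [Gh e])"
  by (rule rel_I) (unfold cohn_rels_def, blast)
lemma R_Gs: "e \<in> E1 \<Longrightarrow> eqv (M [Gh e, Vx (s e)]) (M [Gh e])"
  by (rule rel_I) (unfold cohn_rels_def, blast)
lemma R_GE: "e \<in> E1 \<Longrightarrow> f \<in> E1 \<Longrightarrow> eqv (M [Gh e, Ed f]) (if e = f then M [Vx (r e)] else Z)"
  by (rule rel_I) (unfold cohn_rels_def, blast)
lemma R_X: "v \<in> X \<Longrightarrow> eqv (M [Vx v]) (psum (\<lambda>e. M [Ed e, Gh e]) {e\<in>E1. s e = v})"
  by (rule rel_I) (unfold cohn_rels_def gap_elt_def, blast)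

lemma ctxE: "eqv (M x) (M y) \<Longrightarrow> set u \<subseteq> GG \<Longrightarrow> set w \<subseteq> GG \<Longrightarrow> eqv (M (u @ x @ w)) (M (u @ y @ w))"
  by (rule eqv_mon_ctx)
lemma ctxZ: "M x \<in> II \<Longrightarrow> set u \<subseteq> GG \<Longrightarrow> set w \<subseteq> GG \<Longrightarrow> M (u @ x @ w) \<in> II"
  by (rule I_mon_ctx)

lemma Z_VV: "a \<in> E0 \<Longrightarrow> b \<in> E0 \<Longrightarrow> a \<noteq> b \<Longrightarrow> M [Vx a, Vx b] \<in> II"
  using R_VV[of a b] by (simp add: eqv_zero_I)
lemma Z_GE: "e \<in> E1 \<Longrightarrow> f \<in> E1 \<Longrightarrow> e \<noteq> f \<Longrightarrow> M [Gh e, Ed f] \<in> II"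
  using R_GE[of e f] by (simp add: eqv_zero_I)
lemma Z_VE: assumes "a \<in> E0" "e \<in> E1" "a \<noteq> s e" shows "M [Vx a, Ed e] \<in> II"
proof -
  have "eqv (M ([Vx a] @ [Vx (s e), Ed e] @ [])) (M ([Vx a] @ [Ed e] @ []))"
    using assms by (intro ctxE R_sE) auto
  moreover have "M ([] @ [Vx a, Vx (s e)] @ [Ed e]) \<in> II"
    using assms by (intro ctxZ Z_VV) (auto simp: sE0)
  ultimately show ?thesis by simp (rule eqv_I[OF eqv_sym])
qed
lemma Z_EV: assumes "b \<in> E0" "e \<in> E1" "b \<noteq> r e" shows "M [Ed e, Vx b] \<in> II"
proof -
  have "eqv (M ([] @ [Ed e, Vx (r e)] @ [Vx b])) (M ([] @ [Ed e] @ [Vx b]))"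
    using assms by (intro ctxE R_Er) auto
  moreover have "M ([Ed e] @ [Vx (r e), Vx b] @ []) \<in> II"
    using assms by (intro ctxZ Z_VV) (auto simp: rE0)
  ultimately show ?thesis by simp (rule eqv_I[OF eqv_sym])
qed
lemma Z_EE: assumes "e \<in> E1" "f \<in> E1" "r e \<noteq> s f" shows "M [Ed e, Ed f] \<in> II"
proof -
  have "eqv (M ([] @ [Ed e, Vx (r e)] @ [Ed f])) (M ([] @ [Ed e] @ [Ed f]))"
    using assms by (intro ctxE R_Er) auto
  moreover have "M ([Ed e] @ [Vx (r e), Ed f] @ []) \<in> II"
    using assms by (intro ctxZ Z_VE) (auto simp: rE0)
  ultimately show ?thesis by simp (rule eqv_I[OF eqv_sym])
qed
lemma Z_GV: assumes "b \<in> E0" "e \<in> E1" "b \<noteq> s e" shows "M [Gh e, Vx b] \<in> II"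
proof -
  have "eqv (M ([] @ [Gh e, Vx (s e)] @ [Vx b])) (M ([] @ [Gh e] @ [Vx b]))"
    using assms by (intro ctxE R_Gs) auto
  moreover have "M ([Gh e] @ [Vx (s e), Vx b] @ []) \<in> II"
    using assms by (intro ctxZ Z_VV) (auto simp: sE0)
  ultimately show ?thesis by simp (rule eqv_I[OF eqv_sym])
qed
lemma Z_VG: assumes "a \<in> E0" "e \<in> E1" "a \<noteq> r e" shows "M [Vx a, Gh e] \<in> II"
proof -
  have "eqv (M ([Vx a] @ [Vx (r e), Gh e] @ [])) (M ([Vx a] @ [Gh e] @ []))"
    using assms by (intro ctxE R_rG) auto
  moreover have "M ([] @ [Vx a, Vx (r e)] @ [Gh e]) \<in> II"
    using assms by (intro ctxZ Z_VV) (auto simp: rE0)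
  ultimately show ?thesis by simp (rule eqv_I[OF eqv_sym])
qed
lemma Z_GG: assumes "e \<in> E1" "f \<in> E1" "s f \<noteq> r e" shows "M [Gh f, Gh e] \<in> II"
proof -
  have "eqv (M ([] @ [Gh f, Vx (s f)] @ [Gh e])) (M ([] @ [Gh f] @ [Gh e]))"
    using assms by (intro ctxE R_Gs) auto
  moreover have "M ([Gh f] @ [Vx (s f), Gh e] @ []) \<in> II"
    using assms by (intro ctxZ Z_VG) (auto simp: sE0)
  ultimately show ?thesis by simp (rule eqv_I[OF eqv_sym])
qed

end

context cgg begin

lemma vld_Nil_iff: "vld [] v b \<longleftrightarrow> v \<in> E0 \<and> path b v" by (simp add: vld_def)

lemma STEP:
  assumes g: "g \<in> GG" and v: "vld a v b"
  shows "M (g # nw a v b) \<in> II \<or> (\<exists>a' v' b'. vld a' v' b' \<and>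
     gdeg g + int (length a) - int (length b) = int (length a') - int (length b') \<and>
     eqv (M (g # nw a v b)) (M (nw a' v' b')))"
proof -
  define B :: "('v,'e) cgen list" where "B = map Gh (rev b)"
  have vE0: "v \<in> E0" and pa: "path a v" and pb: "path b v" using v by (auto simp: vld_def)
  have B: "set B \<subseteq> GG" using pto_E1[OF pb] by (auto simp: B_def)
  have A: "set (map Ed a) \<subseteq> GG" using pto_E1[OF pa] by auto
  have nwB: "nw a v b = map Ed a @ Vx v # B" by (simp add: nw_def B_def)
  show ?thesis
  proof (cases g)
    case (Vx x)
    with g have x: "x \<in> E0" by simp
    show ?thesis
    proof (cases a)
      case Nil
      show ?thesis
      proof (cases "x = v")
        case True
        have "eqv (M ([] @ [Vx x, Vx v] @ B)) (M ([] @ [Vx x] @ B))"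
          using R_VV[OF x vE0] True B by (intro ctxE) auto
        then have "eqv (M (g # nw a v b)) (M (nw a v b))" using Nil Vx True by (simp add: nw_def B_def)
        then show ?thesis using v Vx by (intro disjI2 exI[of _ a] exI[of _ v] exI[of _ b]) auto
      next
        case False
        have "M ([] @ [Vx x, Vx v] @ B) \<in> II" using Z_VV[OF x vE0 False] B by (intro ctxZ) auto
        then show ?thesis using Nil Vx by (simp add: nw_def B_def)
      qed
    next
      case (Cons e a')
      have e: "e \<in> E1" using pa Cons by simp
      have R: "set (map Ed a' @ Vx v # B) \<subseteq> GG" using A B vE0 Cons by auto
      show ?thesis
      proof (cases "x = s e")
        case True
        have "eqv (M ([] @ [Vx x, Ed e] @ (map Ed a' @ Vx v # B))) (M ([] @ [Ed e] @ (map Ed a' @ Vx v # B)))"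
          using R_sE[OF e] True R by (intro ctxE) auto
        then have "eqv (M (g # nw a v b)) (M (nw a v b))" using Cons Vx by (simp add: nw_def B_def)
        then show ?thesis using v Vx by (intro disjI2 exI[of _ a] exI[of _ v] exI[of _ b]) auto
      next
        case False
        have "M ([] @ [Vx x, Ed e] @ (map Ed a' @ Vx v # B)) \<in> II" using Z_VE[OF x e False] R by (intro ctxZ) auto
        then show ?thesis using Cons Vx by (simp add: nw_def B_def)
      qed
    qed
  next
    case (Ed e)
    with g have e: "e \<in> E1" by simp
    show ?thesis
    proof (cases a)
      case Nil
      show ?thesis
      proof (cases "r e = v")
        case True
        have "vld [e] v b" using e True v by (simp add: vld_def)
        moreover have "g # nw a v b = nw [e] v b" using Nil Ed by (simp add: nw_def)
        ultimately show ?thesis using Nil Ed by (intro disjI2 exI[of _ "[e]"] exI[of _ v] exI[of _ b]) (auto simp: eqv_refl)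
      next
        case False
        have "M ([] @ [Ed e, Vx v] @ B) \<in> II" using Z_EV[OF vE0 e] False B by (intro ctxZ) auto
        then show ?thesis using Nil Ed by (simp add: nw_def B_def)
      qed
    next
      case (Cons f a')
      have f: "f \<in> E1" using pa Cons by simp
      have R: "set (map Ed a' @ Vx v # B) \<subseteq> GG" using A B vE0 Cons by auto
      show ?thesis
      proof (cases "r e = s f")
        case True
        have "vld (e # a) v b" using e True v Cons by (simp add: vld_def)
        moreover have "g # nw a v b = nw (e # a) v b" using Ed by (simp add: nw_def)
        ultimately show ?thesis using Ed by (intro disjI2 exI[of _ "e # a"] exI[of _ v] exI[of _ b]) (auto simp: eqv_refl)
      next
        case False
        have "M ([] @ [Ed e, Ed f] @ (map Ed a' @ Vx v # B)) \<in> II" using Z_EE[OF e f False] R by (intro ctxZ) auto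
        then show ?thesis using Cons Ed by (simp add: nw_def B_def)
      qed
    qed
  next
    case (Gh e)
    with g have e: "e \<in> E1" by simp
    show ?thesis
    proof (cases a)
      case Nil
      show ?thesis
      proof (cases "s e = v")
        case True
        have "eqv (M ([] @ [Gh e, Vx v] @ B)) (M ([] @ [Gh e] @ B))"
          using R_Gs[OF e] True B by (intro ctxE) auto
        moreover have "eqv (M ([] @ [Gh e] @ B)) (M ([] @ [Vx (r e), Gh e] @ B))"
          using eqv_sym[OF R_rG[OF e]] B by (intro ctxE) auto
        ultimately have "eqv (M ([] @ [Gh e, Vx v] @ B)) (M ([] @ [Vx (r e), Gh e] @ B))"
          by (rule eqv_trans)
        then have "eqv (M (g # nw a v b)) (M (nw [] (r e) (b @ [e])))"
          using Nil Gh by (simp add: nwB nw_def B_def)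
        moreover have "vld [] (r e) (b @ [e])" using rE0[OF e] pb True e by (simp add: vld_def pto_snoc)
        ultimately show ?thesis using Nil Gh by (intro disjI2 exI[of _ "[]"] exI[of _ "r e"] exI[of _ "b @ [e]"]) auto
      next
        case False
        have "M ([] @ [Gh e, Vx v] @ B) \<in> II" using Z_GV[OF vE0 e] False B by (intro ctxZ) auto
        then show ?thesis using Nil Gh by (simp add: nw_def B_def)
      qed
    next
      case (Cons f a')
      note aC = Cons
      have f: "f \<in> E1" using pa Cons by simp
      have R: "set (map Ed a' @ Vx v # B) \<subseteq> GG" using A B vE0 Cons by auto
      show ?thesis
      proof (cases "e = f")
        case False
        have "M ([] @ [Gh e, Ed f] @ (map Ed a' @ Vx v # B)) \<in> II" using Z_GE[OF e f False] R by (intro ctxZ) auto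
        then show ?thesis using Cons Gh by (simp add: nw_def B_def)
      next
        case True
        have h1: "eqv (M ([] @ [Gh e, Ed f] @ (map Ed a' @ Vx v # B))) (M ([] @ [Vx (r e)] @ (map Ed a' @ Vx v # B)))"
          using R_GE[OF e f] True R by (intro ctxE) auto
        show ?thesis
        proof (cases a')
          case Nil
          have rev: "r e = v" using pa aC Nil True by simp
          have "eqv (M ([] @ [Vx v, Vx v] @ B)) (M ([] @ [Vx v] @ B))"
            using R_VV[OF vE0 vE0] B by (intro ctxE) auto
          then have h2: "eqv (M ([] @ [Vx (r e)] @ (map Ed a' @ Vx v # B))) (M (nw [] v b))"
            using Nil rev by (simp add: nw_def B_def)
          have "eqv (M (g # nw a v b)) (M ([] @ [Gh e, Ed f] @ (map Ed a' @ Vx v # B)))"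
            using aC Gh True by (simp add: nw_def B_def eqv_refl)
          then have "eqv (M (g # nw a v b)) (M (nw [] v b))"
            using eqv_trans[OF h1 h2] by (rule eqv_trans)
          moreover have "vld [] v b" using v by (simp add: vld_def)
          ultimately show ?thesis using aC Nil Gh by (intro disjI2 exI[of _ "[]"] exI[of _ v] exI[of _ b]) auto
        next
          case (Cons f' a'')
          have f': "f' \<in> E1" and ref: "r e = s f'" and pa': "path a' v" using pa aC Cons True by auto
          have R2: "set (map Ed a'' @ Vx v # B) \<subseteq> GG" using A B vE0 aC Cons by auto
          have "eqv (M ([] @ [Vx (r e), Ed f'] @ (map Ed a'' @ Vx v # B))) (M ([] @ [Ed f'] @ (map Ed a'' @ Vx v # B)))"
            using R_sE[OF f'] ref R2 by (intro ctxE) auto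
          then have h2: "eqv (M ([] @ [Vx (r e)] @ (map Ed a' @ Vx v # B))) (M (nw a' v b))"
            using Cons by (simp add: nw_def B_def)
          have "eqv (M (g # nw a v b)) (M ([] @ [Gh e, Ed f] @ (map Ed a' @ Vx v # B)))"
            using aC Gh True by (simp add: nw_def B_def eqv_refl)
          then have "eqv (M (g # nw a v b)) (M (nw a' v b))"
            using eqv_trans[OF h1 h2] by (rule eqv_trans)
          moreover have "vld a' v b" using v pa' by (simp add: vld_def)
          ultimately show ?thesis using aC Cons Gh by (intro disjI2 exI[of _ a'] exI[of _ v] exI[of _ b]) auto
        qed
      qed
    qed
  qed
qed

definition NW :: "('v,'e) cgen list set" where "NW = {nw a v b | a v b. vld a v b}"

lemma NFW: "w \<noteq> [] \<Longrightarrow> set w \<subseteq> GG \<Longrightarrow> M w \<in> II \<or> (\<exists>a v b. vld a v b \<and> eqv (M w) (M (nw a v b)))"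
proof (induction w)
  case Nil then show ?case by simp
next
  case (Cons g w)
  have g: "g \<in> GG" using Cons.prems by simp
  show ?case
  proof (cases "w = []")
    case True
    show ?thesis
    proof (cases g)
      case (Vx x)
      then have "vld [] x []" "g # w = nw [] x []" using g True by (auto simp: vld_def nw_def)
      then show ?thesis using eqv_refl by metis
    next
      case (Ed e)
      then have e: "e \<in> E1" using g by simp
      have "vld [e] (r e) []" using e rE0 by (simp add: vld_def)
      moreover have "eqv (M (g # w)) (M (nw [e] (r e) []))"
        using eqv_sym[OF R_Er[OF e]] Ed True by (simp add: nw_def)
      ultimately show ?thesis by blast
    next
      case (Gh e)
      then have e: "e \<in> E1" using g by simp
      have "vld [] (r e) [e]" using e rE0 by (simp add: vld_def)
      moreover have "eqv (M (g # w)) (M (nw [] (r e) [e]))"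
        using eqv_sym[OF R_rG[OF e]] Gh True by (simp add: nw_def)
      ultimately show ?thesis by blast
    qed
  next
    case False
    have w: "set w \<subseteq> GG" using Cons.prems by simp
    from Cons.IH[OF False w] show ?thesis
    proof
      assume "M w \<in> II"
      then have "M ([g] @ w @ []) \<in> II" using g by (intro ctxZ) auto
      then show ?thesis by simp
    next
      assume "\<exists>a v b. vld a v b \<and> eqv (M w) (M (nw a v b))"
      then obtain a v b where v: "vld a v b" and e1: "eqv (M w) (M (nw a v b))" by blast
      have e2: "eqv (M ([g] @ w @ [])) (M ([g] @ nw a v b @ []))" using e1 g set_nw[OF v] by (intro ctxE) auto
      from STEP[OF g v] show ?thesis
      proof
        assume "M (g # nw a v b) \<in> II"
        then show ?thesis using eqv_I[OF e2] by simp
      next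
        assume "\<exists>a' v' b'. vld a' v' b' \<and> gdeg g + int (length a) - int (length b) = int (length a') - int (length b') \<and>
          eqv (M (g # nw a v b)) (M (nw a' v' b'))"
        then obtain a' v' b' where "vld a' v' b'" "eqv (M (g # nw a v b)) (M (nw a' v' b'))" by blast
        moreover have "eqv (M (g # w)) (M (g # nw a v b))" using e2 by simp
        ultimately show ?thesis by (meson eqv_trans)
      qed
    qed
  qed
qed

lemma NW_gens: "w \<in> NW \<Longrightarrow> w \<noteq> [] \<and> set w \<subseteq> GG"
  by (auto simp: NW_def nw_ne dest: set_nw)

lemma NORM:
  assumes p: "p \<in> (FF :: ('k,'v,'e) fpoly set)"
  shows "\<exists>p'. p' \<in> FF \<and> eqv p p' \<and> (\<forall>w. p' w \<noteq> 0 \<longrightarrow> w \<in> NW)"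
proof -
  let ?S = "{w. p w \<noteq> 0}"
  have fin: "finite ?S" and Sw: "\<And>w. w \<in> ?S \<Longrightarrow> w \<noteq> [] \<and> set w \<subseteq> GG" using p by (auto simp: free_iff)
  define N :: "('v,'e) cgen list \<Rightarrow> ('k,'v,'e) fpoly" where
    "N w = (if M w \<in> II then Z else M (SOME x. x \<in> NW \<and> eqv (M w) (M x)))" for w
  have N: "eqv (M w) (N w) \<and> N w \<in> FF \<and> (\<forall>x. N w x \<noteq> 0 \<longrightarrow> x \<in> NW)" if wS: "w \<in> ?S" for w
  proof (cases "M w \<in> II")
    case True
    then show ?thesis by (simp add: N_def eqv_zero_I free_pzero pzero_apply)
  next
    case False
    then obtain a v b where "vld a v b" "eqv (M w) (M (nw a v b))" using NFW Sw[OF wS] by blast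
    then have ex: "\<exists>x. x \<in> NW \<and> eqv (M w) (M x)" by (auto simp: NW_def)
    let ?x = "SOME x. x \<in> NW \<and> eqv (M w) (M x)"
    have x: "?x \<in> NW \<and> eqv (M w) (M ?x)" using someI_ex[OF ex] .
    then show ?thesis using False NW_gens[of ?x] by (auto simp: N_def free_mon mon_apply)
  qed
  define p' where "p' = psum (\<lambda>w. psmul (p w) (N w)) ?S"
  have "p' \<in> FF" unfolding p'_def using N fin by (intro free_psum free_psmul) auto
  moreover have "eqv (psum (\<lambda>w. psmul (p w) (M w)) ?S) p'"
    unfolding p'_def using N fin by (intro eqv_psum eqv_psmul) auto
  then have "eqv p p'" using psum_psmul_mon[OF fin] by simp
  moreover have "\<forall>x. p' x \<noteq> 0 \<longrightarrow> x \<in> NW"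
  proof (intro allI impI)
    fix x assume "p' x \<noteq> 0"
    then obtain w where "w \<in> ?S" "psmul (p w) (N w) x \<noteq> 0"
      unfolding p'_def psum_apply by (meson sum.not_neutral_contains_not_neutral)
    then show "x \<in> NW" using N by (auto simp: psmul_apply)
  qed
  ultimately show ?thesis by blast
qed

end

abbreviation gw :: "'e list \<Rightarrow> ('v,'e) cgen list" where "gw a \<equiv> map Gh (rev a)"
abbreviation ew :: "'e list \<Rightarrow> ('v,'e) cgen list" where "ew a \<equiv> map Ed a"

lemma pto_append: "pto E1 s r (a @ b) v \<Longrightarrow> pto E1 s r a (case b of [] \<Rightarrow> v | f # _ \<Rightarrow> s f) \<and> pto E1 s r b v"
proof (induction a)
  case Nil then show ?case by simp
next
  case (Cons e a) then show ?case by (cases a; cases b) auto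
qed

context cgg begin

lemma set_ew: "path a v \<Longrightarrow> set (ew a) \<subseteq> GG" using pto_E1 by fastforce
lemma set_gw: "path a v \<Longrightarrow> set (gw a) \<subseteq> GG" using pto_E1 by fastforce

lemma G1: "path a v \<Longrightarrow> a \<noteq> [] \<Longrightarrow> set u \<subseteq> GG \<Longrightarrow> set w \<subseteq> GG \<Longrightarrow>
  eqv (M (u @ gw a @ ew a @ w)) (M (u @ [Vx v] @ w))"
proof (induction a arbitrary: u w)
  case Nil then show ?case by simp
next
  case (Cons e a1)
  have e: "e \<in> E1" using Cons.prems by simp
  have a1: "path a1 v" using Cons.prems by simp
  have h1: "eqv (M ((u @ gw a1) @ [Gh e, Ed e] @ (ew a1 @ w))) (M ((u @ gw a1) @ [Vx (r e)] @ (ew a1 @ w)))"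
    using R_GE[OF e e] Cons.prems set_gw[OF a1] set_ew[OF a1] by (intro ctxE) auto
  show ?case
  proof (cases a1)
    case Nil
    then have "r e = v" using Cons.prems by simp
    then show ?thesis using h1 Nil by simp
  next
    case (Cons f a2)
    have f: "f \<in> E1" and ref: "r e = s f" using Cons.prems Cons by auto
    have "eqv (M ((u @ gw a1) @ [Vx (s f), Ed f] @ (ew a2 @ w))) (M ((u @ gw a1) @ [Ed f] @ (ew a2 @ w)))"
      using R_sE[OF f] Cons.prems set_gw[OF a1] set_ew[OF a1] Cons by (intro ctxE) auto
    then have h2: "eqv (M ((u @ gw a1) @ [Vx (r e)] @ (ew a1 @ w))) (M (u @ gw a1 @ ew a1 @ w))"
      using Cons ref by simp
    have h3: "eqv (M (u @ gw a1 @ ew a1 @ w)) (M (u @ [Vx v] @ w))"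
      using Cons.IH[OF a1] Cons Cons.prems by simp
    have h0: "eqv (M (u @ gw (e # a1) @ ew (e # a1) @ w)) (M ((u @ gw a1) @ [Gh e, Ed e] @ (ew a1 @ w)))"
      by (simp add: eqv_refl)
    show ?thesis by (rule eqv_trans[OF h0 eqv_trans[OF h1 eqv_trans[OF h2 h3]]])
  qed
qed

lemma G2: "length a = length c \<Longrightarrow> a \<noteq> c \<Longrightarrow> path a y \<Longrightarrow> path c x \<Longrightarrow> set u \<subseteq> GG \<Longrightarrow> set w \<subseteq> GG \<Longrightarrow>
  M (u @ gw a @ ew c @ w) \<in> II"
proof (induction a arbitrary: c u w)
  case Nil then show ?case by simp
next
  case (Cons e a1)
  then obtain f c1 where c: "c = f # c1" by (cases c) auto
  have e: "e \<in> E1" and f: "f \<in> E1" using Cons.prems c by auto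
  have a1: "path a1 y" and c1: "path c1 x" using Cons.prems c by auto
  have lens: "length a1 = length c1" using Cons.prems c by simp
  show ?case
  proof (cases "e = f")
    case False
    have "M ((u @ gw a1) @ [Gh e, Ed f] @ (ew c1 @ w)) \<in> II"
      using Z_GE[OF e f False] Cons.prems set_gw[OF a1] set_ew[OF c1] by (intro ctxZ) auto
    then show ?thesis using c by simp
  next
    case True
    have ne: "a1 \<noteq> c1" using Cons.prems c True by simp
    then obtain f' c2 where c1e: "c1 = f' # c2" using lens by (cases c1) auto
    have f': "f' \<in> E1" and ref: "r f = s f'" using Cons.prems c c1e by auto
    have h1: "eqv (M ((u @ gw a1) @ [Gh e, Ed f] @ (ew c1 @ w))) (M ((u @ gw a1) @ [Vx (r e)] @ (ew c1 @ w)))"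
      using R_GE[OF e f] True Cons.prems set_gw[OF a1] set_ew[OF c1] by (intro ctxE) auto
    have "eqv (M ((u @ gw a1) @ [Vx (s f'), Ed f'] @ (ew c2 @ w))) (M ((u @ gw a1) @ [Ed f'] @ (ew c2 @ w)))"
      using R_sE[OF f'] Cons.prems set_gw[OF a1] set_ew[OF c1] c1e by (intro ctxE) auto
    then have h2: "eqv (M ((u @ gw a1) @ [Vx (r e)] @ (ew c1 @ w))) (M (u @ gw a1 @ ew c1 @ w))"
      using c1e ref True by simp
    have h3: "M (u @ gw a1 @ ew c1 @ w) \<in> II"
      using Cons.IH[OF lens ne a1 c1] Cons.prems by simp
    have "M (u @ gw (e # a1) @ ew c @ w) = M ((u @ gw a1) @ [Gh e, Ed f] @ (ew c1 @ w))" using c by simp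
    then show ?thesis using eqv_I[OF eqv_trans[OF h1 h2] h3] by simp
  qed
qed


definition vs :: "'v \<Rightarrow> 'e list \<Rightarrow> 'v \<Rightarrow> bool" where
  "vs v g u = (case g of [] \<Rightarrow> u = v | f # _ \<Rightarrow> s f = v)"

lemma LEFT:
  assumes pa: "path a v" and pc: "path c u" and len: "length a \<le> length c" and v: "v \<in> E0" and R: "set R \<subseteq> GG"
  shows "if take (length a) c = a then eqv (M (Vx v # gw a @ ew c @ R)) (M (Vx v # ew (drop (length a) c) @ R))
         else M (Vx v # gw a @ ew c @ R) \<in> II"
proof -
  define ca where "ca = take (length a) c"
  define cb where "cb = drop (length a) c"
  have c: "c = ca @ cb" by (simp add: ca_def cb_def)
  obtain x where pca: "path ca x" and pcb: "path cb u" using pto_append[of E1 s r ca cb u] pc c by auto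
  have Rb: "set (ew cb @ R) \<subseteq> GG" using set_ew[OF pcb] R by auto
  show ?thesis
  proof (cases "ca = a")
    case True
    show ?thesis
    proof (cases "a = []")
      case True then show ?thesis by (simp add: eqv_refl)
    next
      case False
      have h1: "eqv (M ([Vx v] @ gw a @ ew a @ (ew cb @ R))) (M ([Vx v] @ [Vx v] @ (ew cb @ R)))"
        using G1[OF pa False, of "[Vx v]" "ew cb @ R"] v Rb by simp
      have h2: "eqv (M ([] @ [Vx v, Vx v] @ (ew cb @ R))) (M ([] @ [Vx v] @ (ew cb @ R)))"
        using R_VV[OF v v] Rb by (intro ctxE) auto
      have "eqv (M ([Vx v] @ gw a @ ew a @ (ew cb @ R))) (M ([] @ [Vx v] @ (ew cb @ R)))"
        using eqv_trans[OF h1] h2 by simp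
      moreover have cc: "c = a @ cb" using True c by simp
      ultimately show ?thesis by (simp add: cc)
    qed
  next
    case False
    have "length ca = length a" using len by (simp add: ca_def)
    then have "M ([Vx v] @ gw a @ ew ca @ (ew cb @ R)) \<in> II"
      using G2[OF _ _ pa pca, of "[Vx v]" "ew cb @ R"] False v Rb by auto
    then have "M (Vx v # gw a @ ew c @ R) \<in> II" using c by simp
    moreover have "take (length a) c \<noteq> a" using False by (simp add: ca_def)
    ultimately show ?thesis by simp
  qed
qed

lemma VXFIX:
  assumes v: "v \<in> E0" and u: "u \<in> E0" and pg: "path g u" and R: "set R \<subseteq> GG"
  shows "if vs v g u then eqv (M (Vx v # ew g @ Vx u # R)) (M (ew g @ Vx u # R))
         else M (Vx v # ew g @ Vx u # R) \<in> II"
proof (cases g)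
  case Nil
  show ?thesis
  proof (cases "u = v")
    case True
    have "eqv (M ([] @ [Vx v, Vx u] @ R)) (M ([] @ [Vx u] @ R))"
      using R_VV[OF v u] True R by (intro ctxE) auto
    then show ?thesis using Nil True by (simp add: vs_def)
  next
    case False
    have "M ([] @ [Vx v, Vx u] @ R) \<in> II" using Z_VV[OF v u] False R by (intro ctxZ) auto
    then show ?thesis using Nil False by (simp add: vs_def)
  qed
next
  case (Cons f g')
  have f: "f \<in> E1" and pg': "path g' u" using pg Cons by auto
  have R': "set (ew g' @ Vx u # R) \<subseteq> GG" using set_ew[OF pg'] u R by auto
  show ?thesis
  proof (cases "s f = v")
    case True
    have "eqv (M ([] @ [Vx (s f), Ed f] @ (ew g' @ Vx u # R))) (M ([] @ [Ed f] @ (ew g' @ Vx u # R)))"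
      using R_sE[OF f] R' by (intro ctxE) auto
    then show ?thesis using Cons True by (simp add: vs_def)
  next
    case False
    have "M ([] @ [Vx v, Ed f] @ (ew g' @ Vx u # R)) \<in> II" using Z_VE[OF v f] False R' by (intro ctxZ) auto
    then show ?thesis using Cons False by (simp add: vs_def)
  qed
qed

lemma RIGHT:
  assumes pb: "path b v" and pd: "path d u" and len: "length b \<le> length d" and v: "v \<in> E0" and L: "set L \<subseteq> GG"
  shows "if take (length b) d = b then eqv (M (L @ gw d @ ew b @ [Vx v])) (M (L @ gw (drop (length b) d) @ [Vx v]))
         else M (L @ gw d @ ew b @ [Vx v]) \<in> II"
proof -
  define da where "da = take (length b) d"
  define db where "db = drop (length b) d"
  have d: "d = da @ db" by (simp add: da_def db_def)
  obtain x where pda: "path da x" and pdb: "path db u" using pto_append[of E1 s r da db u] pd d by auto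
  have Lb: "set (L @ gw db) \<subseteq> GG" using set_gw[OF pdb] L by auto
  show ?thesis
  proof (cases "da = b")
    case True
    show ?thesis
    proof (cases "b = []")
      case True then show ?thesis by (simp add: eqv_refl)
    next
      case False
      have h1: "eqv (M ((L @ gw db) @ gw b @ ew b @ [Vx v])) (M ((L @ gw db) @ [Vx v] @ [Vx v]))"
        using G1[OF pb False, of "L @ gw db" "[Vx v]"] v Lb by simp
      have h2: "eqv (M ((L @ gw db) @ [Vx v, Vx v] @ [])) (M ((L @ gw db) @ [Vx v] @ []))"
        using R_VV[OF v v] Lb by (intro ctxE) auto
      have "eqv (M ((L @ gw db) @ gw b @ ew b @ [Vx v])) (M ((L @ gw db) @ [Vx v] @ []))"
        using eqv_trans[OF h1] h2 by simp
      moreover have dd: "d = b @ db" using True d by simp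
      ultimately show ?thesis by (simp add: dd)
    qed
  next
    case False
    have "length da = length b" using len by (simp add: da_def)
    then have "M ((L @ gw db) @ gw da @ ew b @ [Vx v]) \<in> II"
      using G2[OF _ _ pda pb, of "L @ gw db" "[Vx v]"] False v Lb by auto
    then have "M (L @ gw d @ ew b @ [Vx v]) \<in> II" using d by simp
    moreover have "take (length b) d \<noteq> b" using False by (simp add: da_def)
    ultimately show ?thesis by simp
  qed
qed

lemma VXFIXR:
  assumes v: "v \<in> E0" and u: "u \<in> E0" and pg: "path g u" and L: "set L \<subseteq> GG"
  shows "if vs v g u then eqv (M (L @ Vx u # gw g @ [Vx v])) (M (L @ Vx u # gw g))
         else M (L @ Vx u # gw g @ [Vx v]) \<in> II"
proof (cases g)
  case Nil
  show ?thesis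
  proof (cases "u = v")
    case True
    have "eqv (M (L @ [Vx u, Vx v] @ [])) (M (L @ [Vx u] @ []))"
      using R_VV[OF u v] True L by (intro ctxE) auto
    then show ?thesis using Nil True by (simp add: vs_def)
  next
    case False
    have "M (L @ [Vx u, Vx v] @ []) \<in> II" using Z_VV[OF u v] False L by (intro ctxZ) auto
    then show ?thesis using Nil False by (simp add: vs_def)
  qed
next
  case (Cons f g')
  have f: "f \<in> E1" and pg': "path g' u" using pg Cons by auto
  have L': "set (L @ Vx u # gw g') \<subseteq> GG" using set_gw[OF pg'] u L by auto
  show ?thesis
  proof (cases "s f = v")
    case True
    have "eqv (M ((L @ Vx u # gw g') @ [Gh f, Vx (s f)] @ [])) (M ((L @ Vx u # gw g') @ [Gh f] @ []))"
      using R_Gs[OF f] L' by (intro ctxE) auto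
    then show ?thesis using Cons True by (simp add: vs_def)
  next
    case False
    have "M ((L @ Vx u # gw g') @ [Gh f, Vx v] @ []) \<in> II" using Z_GV[OF v f] False L' by (intro ctxZ) auto
    then show ?thesis using Cons False by (simp add: vs_def)
  qed
qed


lemma RED:
  assumes va: "vld a v b" and vc: "vld c u d" and la: "length a \<le> length c" and lb: "length b \<le> length d"
  shows "if take (length a) c = a \<and> take (length b) d = b \<and> vs v (drop (length a) c) u \<and> vs v (drop (length b) d) u
    then eqv (M (Vx v # gw a @ nw c u d @ ew b @ [Vx v])) (M (nw (drop (length a) c) u (drop (length b) d)))
    else M (Vx v # gw a @ nw c u d @ ew b @ [Vx v]) \<in> II"
proof -
  have v: "v \<in> E0" and pa: "path a v" and pb: "path b v" using va by (auto simp: vld_def)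
  have u: "u \<in> E0" and pc: "path c u" and pd: "path d u" using vc by (auto simp: vld_def)
  define c' where "c' = drop (length a) c"
  define d' where "d' = drop (length b) d"
  have pc': "path c' u" using pto_append[of E1 s r "take (length a) c" c' u] pc by (simp add: c'_def)
  have pd': "path d' u" using pto_append[of E1 s r "take (length b) d" d' u] pd by (simp add: d'_def)
  let ?W = "Vx v # gw a @ nw c u d @ ew b @ [Vx v]"
  let ?W1 = "Vx v # ew c' @ Vx u # (gw d @ ew b @ [Vx v])"
  let ?W2 = "ew c' @ Vx u # (gw d @ ew b @ [Vx v])"
  let ?W3 = "(ew c' @ [Vx u]) @ gw d' @ [Vx v]"
  let ?W4 = "nw c' u d'"
  have R1: "set (Vx u # gw d @ ew b @ [Vx v]) \<subseteq> GG" using u v set_gw[OF pd] set_ew[OF pb] by auto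
  have S1: "if take (length a) c = a then eqv (M ?W) (M ?W1) else M ?W \<in> II"
    using LEFT[OF pa pc la v R1] by (simp add: nw_def c'_def split: if_splits)
  have S2: "if vs v c' u then eqv (M ?W1) (M ?W2) else M ?W1 \<in> II"
    using VXFIX[OF v u pc', of "gw d @ ew b @ [Vx v]"] R1 by (simp split: if_splits)
  have L3: "set (ew c' @ [Vx u]) \<subseteq> GG" using set_ew[OF pc'] u by auto
  have S3: "if take (length b) d = b then eqv (M ?W2) (M ?W3) else M ?W2 \<in> II"
    using RIGHT[OF pb pd lb v L3] by (simp add: d'_def split: if_splits)
  have S4: "if vs v d' u then eqv (M ?W3) (M ?W4) else M ?W3 \<in> II"
    using VXFIXR[OF v u pd' set_ew[OF pc']] by (simp add: nw_def split: if_splits)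
  show ?thesis
  proof (cases "take (length a) c = a")
    case False then show ?thesis using S1 by simp
  next
    case T1: True
    then have e1: "eqv (M ?W) (M ?W1)" using S1 by simp
    show ?thesis
    proof (cases "vs v c' u")
      case False
      then have "M ?W \<in> II" using S2 eqv_I[OF e1] by simp
      then show ?thesis using False by (simp add: c'_def)
    next
      case T2: True
      then have e2: "eqv (M ?W) (M ?W2)" using S2 eqv_trans[OF e1] by simp
      show ?thesis
      proof (cases "take (length b) d = b")
        case False
        then have "M ?W \<in> II" using S3 eqv_I[OF e2] by simp
        then show ?thesis using False by simp
      next
        case T3: True
        then have e3: "eqv (M ?W) (M ?W3)" using S3 eqv_trans[OF e2] by simp
        show ?thesis
        proof (cases "vs v d' u")
          case False
          then have "M ?W \<in> II" using S4 eqv_I[OF e3] by simp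
          then show ?thesis using False by (simp add: d'_def)
        next
          case True
          then have "eqv (M ?W) (M ?W4)" using S4 eqv_trans[OF e3] by simp
          then show ?thesis using T1 T2 T3 True by (simp add: c'_def d'_def)
        qed
      qed
    qed
  qed
qed

end

lemma nw_inj: "nw a v b = nw a' v' b' \<Longrightarrow> a = a' \<and> v = v' \<and> b = b'"
proof (induction a arbitrary: a')
  case Nil
  then show ?case by (cases a') (auto simp: nw_def dest: map_injective simp: inj_def)
next
  case (Cons e a)
  then show ?case by (cases a') (auto simp: nw_def)
qed

locale mainloc = cgg E0 E1 s r X KK
  for E0 :: "'v set" and E1 :: "'e set" and s r :: "'e \<Rightarrow> 'v" and X :: "'v set" and KK :: "'k::field itself" +
  fixes Agr :: "int \<Rightarrow> 'a::ring set" and \<phi> :: "('k,'v,'e) fpoly \<Rightarrow> 'a"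
  assumes X: "X \<subseteq> reg_vertices E0 E1 s"
    and A: "graded_ring Agr"
    and hom_add: "\<forall>p\<in>cohn_free E0 E1. \<forall>q\<in>cohn_free E0 E1. \<phi> (padd p q) = \<phi> p + \<phi> q"
    and hom_mul: "\<forall>p\<in>cohn_free E0 E1. \<forall>q\<in>cohn_free E0 E1. \<phi> (pmul p q) = \<phi> p * \<phi> q"
    and hom_rel: "\<forall>p\<in>cohn_ideal E0 E1 s r X. \<phi> p = 0"
    and graded: "\<forall>n. \<forall>p\<in>cohn_free E0 E1. homogeneous n p \<longrightarrow> \<phi> p \<in> Agr n"
    and vert: "\<forall>u\<in>E0. \<phi> (mon [Vx u]) \<noteq> 0"
    and Y: "\<forall>v\<in>reg_vertices E0 E1 s - X. \<phi> (gap_elt E1 s v) \<noteq> 0"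
begin

lemma phi_zero: "\<phi> Z = 0"
proof -
  have "padd Z Z = Z" by (rule ext) (simp add: padd_def pzero_def)
  then have "\<phi> Z = \<phi> Z + \<phi> Z" using hom_add free_pzero by metis
  then show ?thesis by simp
qed

lemma phi_psum: "finite S \<Longrightarrow> (\<And>i. i \<in> S \<Longrightarrow> f i \<in> FF) \<Longrightarrow> \<phi> (psum f S) = (\<Sum>i\<in>S. \<phi> (f i))"
proof (induction S rule: finite_induct)
  case empty then show ?case by (simp add: phi_zero)
next
  case (insert x S)
  then have "psum f S \<in> FF" by (intro free_psum) auto
  then show ?case using insert hom_add by (simp add: psum_insert)
qed

lemma phi_psub: "p \<in> FF \<Longrightarrow> q \<in> FF \<Longrightarrow> \<phi> (psub p q) = \<phi> p - \<phi> q"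
proof -
  assume p: "p \<in> FF" and q: "q \<in> FF"
  have "p = padd (psub p q) q" by (rule ext) (simp add: psub_def padd_def)
  then have "\<phi> p = \<phi> (psub p q) + \<phi> q" using hom_add free_psub[OF p q] q by metis
  then show ?thesis by (simp add: algebra_simps)
qed

lemma phi_I: "p \<in> II \<Longrightarrow> \<phi> p = 0" using hom_rel by blast

lemma phi_eqv: "p \<in> FF \<Longrightarrow> q \<in> FF \<Longrightarrow> eqv p q \<Longrightarrow> \<phi> p = \<phi> q"
  using phi_psub phi_I by fastforce

lemma phi_mul: "p \<in> FF \<Longrightarrow> q \<in> FF \<Longrightarrow> \<phi> (pmul p q) = \<phi> p * \<phi> q"
  using hom_mul by blast

lemma freeM: "w \<noteq> [] \<Longrightarrow> set w \<subseteq> GG \<Longrightarrow> M w \<in> FF" by (rule free_mon)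

lemma phi_app: "u \<noteq> [] \<Longrightarrow> w \<noteq> [] \<Longrightarrow> set u \<subseteq> GG \<Longrightarrow> set w \<subseteq> GG \<Longrightarrow>
  \<phi> (psmul c (M (u @ w))) = \<phi> (psmul c (M u)) * \<phi> (M w)"
proof -
  assume a: "u \<noteq> []" "w \<noteq> []" "set u \<subseteq> GG" "set w \<subseteq> GG"
  have "psmul c (M (u @ w)) = pmul (psmul c (M u)) (M w)" by (simp add: pmul_psmul_left mon_mul)
  then show ?thesis using a by (simp add: phi_mul free_psmul freeM)
qed

lemma phi_app1: "u \<noteq> [] \<Longrightarrow> w \<noteq> [] \<Longrightarrow> set u \<subseteq> GG \<Longrightarrow> set w \<subseteq> GG \<Longrightarrow>
  \<phi> (M (u @ w)) = \<phi> (M u) * \<phi> (M w)"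
  using phi_app[of u w 1] by simp

lemma phi_eqvM: "w \<noteq> [] \<Longrightarrow> set w \<subseteq> GG \<Longrightarrow> w' \<noteq> [] \<Longrightarrow> set w' \<subseteq> GG \<Longrightarrow> eqv (M w) (M w') \<Longrightarrow>
  \<phi> (M w) = \<phi> (M w')"
  by (rule phi_eqv) (auto simp: freeM)

lemma phi_IM: "M w \<in> II \<Longrightarrow> \<phi> (M w) = 0" by (rule phi_I)

lemma VV: "x \<in> E0 \<Longrightarrow> \<phi> (M [Vx x]) * \<phi> (M [Vx x]) = \<phi> (M [Vx x])"
proof -
  assume x: "x \<in> E0"
  have "\<phi> (M ([Vx x] @ [Vx x])) = \<phi> (M [Vx x]) * \<phi> (M [Vx x])" using x by (intro phi_app1) auto
  moreover have "\<phi> (M [Vx x, Vx x]) = \<phi> (M [Vx x])" using x R_VV[OF x x] by (intro phi_eqvM) auto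
  ultimately show ?thesis by simp
qed

lemma Lam_inv: "x \<in> E0 \<Longrightarrow> c \<noteq> 0 \<Longrightarrow> \<phi> (psmul (inverse c) (M [Vx x])) * \<phi> (psmul c (M [Vx x])) = \<phi> (M [Vx x])"
proof -
  assume x: "x \<in> E0" and c: "c \<noteq> 0"
  have fr: "M [Vx x] \<in> FF" using x by (intro freeM) auto
  have "pmul (psmul (inverse c) (M [Vx x])) (psmul c (M [Vx x])) = M [Vx x, Vx x]"
    using c by (simp add: pmul_psmul_left pmul_psmul_right psmul_psmul mon_mul)
  then have "\<phi> (psmul (inverse c) (M [Vx x])) * \<phi> (psmul c (M [Vx x])) = \<phi> (M [Vx x, Vx x])"
    using fr by (metis phi_mul free_psmul)
  also have "\<dots> = \<phi> (M [Vx x])" using x R_VV[OF x x] by (intro phi_eqvM) auto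
  finally show ?thesis .
qed

lemma K1:
  assumes fin: "finite S" and hw: "\<And>i. i \<in> S \<Longrightarrow> h i \<noteq> [] \<and> set (h i) \<subseteq> GG"
    and z: "\<phi> (psum (\<lambda>i. psmul (a i) (M (h i))) S) = 0" and x: "x \<in> E0"
    and T: "\<And>i. i \<in> S \<Longrightarrow> a i \<noteq> 0 \<Longrightarrow> h i \<noteq> [Vx x] \<Longrightarrow> (\<exists>w0 g. h i = w0 @ [g] \<and> w0 \<noteq> [] \<and> \<phi> (M [g]) * t = 0)"
    and nz: "\<phi> (M [Vx x]) * t \<noteq> 0"
  shows "(\<Sum>i\<in>{i\<in>S. h i = [Vx x]}. a i) = 0"
proof (rule ccontr)
  let ?S1 = "{i\<in>S. h i = [Vx x]}"
  let ?c = "\<Sum>i\<in>?S1. a i"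
  assume c: "?c \<noteq> 0"
  have fS1: "finite ?S1" using fin by simp
  have free_i: "psmul (a i) (M (h i)) \<in> FF" if "i \<in> S" for i using hw[OF that] by (intro free_psmul freeM) auto
  have "0 = \<phi> (psum (\<lambda>i. psmul (a i) (M (h i))) S) * t" using z by simp
  also have "\<dots> = (\<Sum>i\<in>S. \<phi> (psmul (a i) (M (h i))) * t)"
    using phi_psum[OF fin free_i] by (simp add: sum_distrib_right)
  also have "\<dots> = (\<Sum>i\<in>?S1. \<phi> (psmul (a i) (M [Vx x])) * t)"
  proof (rule sum.mono_neutral_cong_right[OF fin])
    show "?S1 \<subseteq> S" by auto
    show "\<forall>i\<in>S - ?S1. \<phi> (psmul (a i) (M (h i))) * t = 0"
    proof
    fix i assume iS: "i \<in> S - ?S1"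
    show "\<phi> (psmul (a i) (M (h i))) * t = 0"
    proof (cases "a i = 0")
      case True then show ?thesis by (simp add: phi_zero)
    next
      case False
      then obtain w0 g where hg: "h i = w0 @ [g]" "w0 \<noteq> []" "\<phi> (M [g]) * t = 0" using T iS by blast
      have "\<phi> (psmul (a i) (M (h i))) = \<phi> (psmul (a i) (M w0)) * \<phi> (M [g])"
        using hg hw[of i] iS by (simp add: phi_app)
      then show ?thesis using hg by (simp add: mult.assoc)
    qed
    qed
  qed simp
  also have "\<dots> = \<phi> (psum (\<lambda>i. psmul (a i) (M [Vx x])) ?S1) * t"
    using x by (subst phi_psum[OF fS1]) (auto simp: sum_distrib_right intro!: free_psmul freeM)
  also have "psum (\<lambda>i. psmul (a i) (M [Vx x])) ?S1 = psmul ?c (M [Vx x])"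
    by (rule ext) (simp add: psum_def psmul_def sum_distrib_right)
  finally have z2: "\<phi> (psmul ?c (M [Vx x])) * t = 0" by simp
  have "\<phi> (M [Vx x]) * t = \<phi> (psmul (inverse ?c) (M [Vx x])) * (\<phi> (psmul ?c (M [Vx x])) * t)"
    using Lam_inv[OF x c] by (simp add: mult.assoc[symmetric])
  also have "\<dots> = 0" using z2 by simp
  finally show False using nz by simp
qed

end

context mainloc begin

lemma V_nz: "x \<in> E0 \<Longrightarrow> \<phi> (M [Vx x]) * \<phi> (M [Vx x]) \<noteq> 0"
  using VV vert by simp

lemma phi_gap:
  assumes v: "v \<in> reg_vertices E0 E1 s"
  shows "\<phi> (gap_elt E1 s v) = \<phi> (M [Vx v]) - (\<Sum>e\<in>{e\<in>E1. s e = v}. \<phi> (M [Ed e, Gh e]))"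
proof -
  have fin: "finite {e\<in>E1. s e = v}" and vE: "v \<in> E0" using v by (auto simp: reg_vertices_def)
  have fr: "M [Ed e, Gh e] \<in> FF" if "e \<in> {e\<in>E1. s e = v}" for e using that by (intro freeM) auto
  have "\<phi> (gap_elt E1 s v) = \<phi> (M [Vx v]) - \<phi> (psum (\<lambda>e. M [Ed e, Gh e]) {e\<in>E1. s e = v})"
    unfolding gap_elt_def using vE fin fr by (intro phi_psub freeM free_psum) auto
  also have "\<phi> (psum (\<lambda>e. M [Ed e, Gh e]) {e\<in>E1. s e = v}) = (\<Sum>e\<in>{e\<in>E1. s e = v}. \<phi> (M [Ed e, Gh e]))"
    using fin fr by (rule phi_psum)
  finally show ?thesis .
qed

lemma MULT_Y:
  assumes v: "v \<in> reg_vertices E0 E1 s" "v \<notin> X"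
  shows "(\<forall>f\<in>E1. s f = v \<longrightarrow> \<phi> (M [Gh f]) * \<phi> (gap_elt E1 s v) = 0) \<and> \<phi> (M [Vx v]) * \<phi> (gap_elt E1 s v) \<noteq> 0"
proof -
  let ?Sv = "{e\<in>E1. s e = v}"
  have fin: "finite ?Sv" and vE: "v \<in> E0" using v by (auto simp: reg_vertices_def)
  have A1: "\<phi> (M [Gh f]) * \<phi> (gap_elt E1 s v) = 0" if f: "f \<in> E1" "s f = v" for f
  proof -
    have "\<phi> (M [Gh f]) * \<phi> (M [Vx v]) = \<phi> (M ([Gh f] @ [Vx v]))" using f vE by (intro phi_app1[symmetric]) auto
    also have "\<dots> = \<phi> (M [Gh f])" using f vE R_Gs[of f] by (intro phi_eqvM) auto
    finally have h1: "\<phi> (M [Gh f]) * \<phi> (M [Vx v]) = \<phi> (M [Gh f])" .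
    have h2: "\<phi> (M [Gh f]) * \<phi> (M [Ed e, Gh e]) = (if e = f then \<phi> (M [Gh f]) else 0)" if e: "e \<in> ?Sv" for e
    proof -
      have "\<phi> (M [Gh f]) * \<phi> (M [Ed e, Gh e]) = \<phi> (M ([Gh f] @ [Ed e, Gh e]))" using f e by (intro phi_app1[symmetric]) auto
      also have "\<dots> = (if e = f then \<phi> (M [Gh f]) else 0)"
      proof (cases "e = f")
        case True
        have "eqv (M ([] @ [Gh f, Ed f] @ [Gh f])) (M ([] @ [Vx (r f)] @ [Gh f]))"
          using R_GE[of f f] f by (intro ctxE) auto
        then have "eqv (M [Gh f, Ed f, Gh f]) (M [Gh f])" using eqv_trans R_rG[of f] f by fastforce
        then show ?thesis using True f rE0 by (simp add: phi_eqvM)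
      next
        case False
        have "M ([] @ [Gh f, Ed e] @ [Gh e]) \<in> II" using Z_GE[of f e] False f e by (intro ctxZ) auto
        then show ?thesis using False by (simp add: phi_IM)
      qed
      finally show ?thesis .
    qed
    have "\<phi> (M [Gh f]) * \<phi> (gap_elt E1 s v) = \<phi> (M [Gh f]) * \<phi> (M [Vx v]) - (\<Sum>e\<in>?Sv. \<phi> (M [Gh f]) * \<phi> (M [Ed e, Gh e]))"
      using phi_gap[OF v(1)] by (simp add: right_diff_distrib sum_distrib_left)
    also have "(\<Sum>e\<in>?Sv. \<phi> (M [Gh f]) * \<phi> (M [Ed e, Gh e])) = (\<Sum>e\<in>?Sv. if e = f then \<phi> (M [Gh f]) else 0)"
      using h2 by (rule sum.cong[OF refl])
    also have "\<dots> = \<phi> (M [Gh f])" using fin f by (simp add: sum.delta)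
    finally show ?thesis using h1 by simp
  qed
  have "\<phi> (M [Vx v]) * \<phi> (M [Ed e, Gh e]) = \<phi> (M [Ed e, Gh e])" if e: "e \<in> ?Sv" for e
  proof -
    have "\<phi> (M [Vx v]) * \<phi> (M [Ed e, Gh e]) = \<phi> (M ([Vx v] @ [Ed e, Gh e]))" using e vE by (intro phi_app1[symmetric]) auto
    also have "\<dots> = \<phi> (M [Ed e, Gh e])"
    proof -
      have "eqv (M ([] @ [Vx (s e), Ed e] @ [Gh e])) (M ([] @ [Ed e] @ [Gh e]))" using R_sE[of e] e by (intro ctxE) auto
      then show ?thesis using e vE by (simp add: phi_eqvM)
    qed
    finally show ?thesis .
  qed
  then have "\<phi> (M [Vx v]) * \<phi> (gap_elt E1 s v) = \<phi> (gap_elt E1 s v)"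
    using phi_gap[OF v(1)] VV[OF vE] by (simp add: right_diff_distrib sum_distrib_left)
  then have "\<phi> (M [Vx v]) * \<phi> (gap_elt E1 s v) \<noteq> 0" using Y v by simp
  then show ?thesis using A1 by blast
qed

lemma MULT_INF:
  assumes f0: "f0 \<in> E1"
  shows "(\<forall>f\<in>E1. f \<noteq> f0 \<longrightarrow> \<phi> (M [Gh f]) * \<phi> (M [Ed f0]) = 0) \<and> \<phi> (M [Vx (s f0)]) * \<phi> (M [Ed f0]) \<noteq> 0"
proof -
  have a: "\<phi> (M [Gh f]) * \<phi> (M [Ed f0]) = 0" if "f \<in> E1" "f \<noteq> f0" for f
  proof -
    have "\<phi> (M [Gh f]) * \<phi> (M [Ed f0]) = \<phi> (M ([Gh f] @ [Ed f0]))" using f0 that by (intro phi_app1[symmetric]) auto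
    then show ?thesis using Z_GE[of f f0] f0 that by (simp add: phi_IM)
  qed
  have "\<phi> (M [Vx (s f0)]) * \<phi> (M [Ed f0]) = \<phi> (M ([Vx (s f0)] @ [Ed f0]))" using f0 sE0 by (intro phi_app1[symmetric]) auto
  also have "\<dots> = \<phi> (M [Ed f0])" using R_sE[of f0] f0 sE0 by (intro phi_eqvM) auto
  finally have b: "\<phi> (M [Vx (s f0)]) * \<phi> (M [Ed f0]) = \<phi> (M [Ed f0])" .
  have "\<phi> (M [Gh f0]) * \<phi> (M [Ed f0]) = \<phi> (M ([Gh f0] @ [Ed f0]))" using f0 by (intro phi_app1[symmetric]) auto
  also have "\<dots> = \<phi> (M [Vx (r f0)])" using R_GE[of f0 f0] f0 rE0 by (intro phi_eqvM) auto
  finally have "\<phi> (M [Ed f0]) \<noteq> 0" using vert rE0[OF f0] by auto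
  then show ?thesis using a b by simp
qed

end

context mainloc begin

definition nwt :: "'e list \<times> 'v \<times> 'e list \<Rightarrow> ('v,'e) cgen list" where
  "nwt t = nw (fst t) (fst (snd t)) (snd (snd t))"

lemma nwt_inj: "inj nwt"
  by (rule injI) (auto simp: nwt_def dest: nw_inj simp: prod_eq_iff)

lemma rep_triples:
  assumes qF: "q \<in> FF" and qN: "\<forall>w. q w \<noteq> 0 \<longrightarrow> w \<in> NW"
  defines "Tr \<equiv> {t. vld (fst t) (fst (snd t)) (snd (snd t)) \<and> q (nwt t) \<noteq> 0}"
  shows "finite Tr" "q = psum (\<lambda>t. psmul (q (nwt t)) (M (nwt t))) Tr"
proof -
  have fin: "finite {w. q w \<noteq> 0}" using qF by (simp add: free_iff)
  have img: "nwt ` Tr = {w. q w \<noteq> 0}"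
  proof
    show "nwt ` Tr \<subseteq> {w. q w \<noteq> 0}" by (auto simp: Tr_def)
    show "{w. q w \<noteq> 0} \<subseteq> nwt ` Tr"
    proof
      fix w assume "w \<in> {w. q w \<noteq> 0}"
      then have "w \<in> NW" "q w \<noteq> 0" using qN by auto
      then obtain a v b where "vld a v b" "w = nw a v b" "q w \<noteq> 0" by (auto simp: NW_def)
      then show "w \<in> nwt ` Tr" by (intro image_eqI[of _ _ "(a,v,b)"]) (auto simp: Tr_def nwt_def)
    qed
  qed
  have inj: "inj_on nwt Tr" using nwt_inj by (rule inj_on_subset) simp
  show "finite Tr" using fin img inj finite_imageD by metis
  have "q = psum (\<lambda>w. psmul (q w) (M w)) {w. q w \<noteq> 0}" using psum_psmul_mon[OF fin] by simp
  also have "\<dots> = psum (\<lambda>t. psmul (q (nwt t)) (M (nwt t))) Tr"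
    unfolding img[symmetric] psum_def by (rule ext) (simp add: sum.reindex[OF inj])
  finally show "q = psum (\<lambda>t. psmul (q (nwt t)) (M (nwt t))) Tr" .
qed


lemma KILL:
  assumes qF: "q \<in> FF" and qN: "\<forall>w. q w \<noteq> 0 \<longrightarrow> w \<in> NW" and hom: "homogeneous dd q" and z: "\<phi> q = 0"
    and mlow: "\<forall>a u b. vld a u b \<longrightarrow> q (nw a u b) \<noteq> 0 \<longrightarrow> m \<le> length b"
    and t0: "vld \<alpha> v \<beta>" and bm: "length \<beta> = m"
    and side: "v \<notin> X \<or> (\<forall>a u b. vld a u b \<longrightarrow> q (nw a u b) \<noteq> 0 \<longrightarrow> length b \<le> m)"
  shows "q (nw \<alpha> v \<beta>) = 0"
proof (rule ccontr)
  assume c0: "q (nw \<alpha> v \<beta>) \<noteq> 0"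
  define Tr where "Tr = {t. vld (fst t) (fst (snd t)) (snd (snd t)) \<and> q (nwt t) \<noteq> 0}"
  have finT: "finite Tr" and qrep: "q = psum (\<lambda>t. psmul (q (nwt t)) (M (nwt t))) Tr"
    unfolding Tr_def by (rule rep_triples(1)[OF qF qN], rule rep_triples(2)[OF qF qN])
  have vE: "v \<in> E0" and pa: "path \<alpha> v" and pb: "path \<beta> v" using t0 by (auto simp: vld_def)
  have "wdeg (nw \<alpha> v \<beta>) = dd" using hom c0 unfolding homogeneous_def by blast
  then have dd: "dd = int (length \<alpha>) - int (length \<beta>)" by (simp add: wdeg_nw)
  have Trp: "vld c u d \<and> length \<beta> \<le> length d \<and> length \<alpha> \<le> length c \<and>
      int (length c) - int (length d) = int (length \<alpha>) - int (length \<beta>)" if cud: "(c,u,d) \<in> Tr" for c u d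
  proof -
    have v1: "vld c u d" and q1: "q (nw c u d) \<noteq> 0" using cud by (auto simp: Tr_def nwt_def)
    have l1: "length \<beta> \<le> length d" using mlow v1 q1 bm by auto
    have "wdeg (nw c u d) = dd" using hom q1 unfolding homogeneous_def by blast
    then have "int (length c) - int (length d) = dd" by (simp add: wdeg_nw)
    then show ?thesis using v1 l1 dd by auto
  qed
  define Lw :: "('v,'e) cgen list" where "Lw = Vx v # gw \<alpha>"
  define Rw :: "('v,'e) cgen list" where "Rw = ew \<beta> @ [Vx v]"
  have LwG: "Lw \<noteq> [] \<and> set Lw \<subseteq> GG" using vE set_gw[OF pa] by (simp add: Lw_def)
  have RwG: "Rw \<noteq> [] \<and> set Rw \<subseteq> GG" using vE set_ew[OF pb] by (simp add: Rw_def)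
  define Cd where "Cd t = (take (length \<alpha>) (fst t) = \<alpha> \<and> take (length \<beta>) (snd (snd t)) = \<beta> \<and>
      vs v (drop (length \<alpha>) (fst t)) (fst (snd t)) \<and> vs v (drop (length \<beta>) (snd (snd t))) (fst (snd t)))" for t
  define h where "h t = (if Cd t then nw (drop (length \<alpha>) (fst t)) (fst (snd t)) (drop (length \<beta>) (snd (snd t))) else [Vx v])" for t
  define a where "a t = (if Cd t then q (nwt t) else 0)" for t
  have P0: "pmul (pmul (M Lw) (psum (\<lambda>t. psmul (q (nwt t)) (M (nwt t))) Tr)) (M Rw) =
      psum (\<lambda>t. psmul (q (nwt t)) (M (Lw @ nwt t @ Rw))) Tr"
    by (simp add: pmul_psum_left pmul_psum_right pmul_psmul_left pmul_psmul_right mon_mul)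
  have P: "pmul (pmul (M Lw) q) (M Rw) = psum (\<lambda>t. psmul (q (nwt t)) (M (Lw @ nwt t @ Rw))) Tr"
    using P0 qrep[symmetric] by simp
  have fLw: "M Lw \<in> FF" and fRw: "M Rw \<in> FF" using LwG RwG by (auto intro: freeM)
  have "\<phi> (pmul (pmul (M Lw) q) (M Rw)) = \<phi> (M Lw) * \<phi> q * \<phi> (M Rw)"
    using fLw fRw qF by (simp add: phi_mul free_pmul)
  then have phiP: "\<phi> (psum (\<lambda>t. psmul (q (nwt t)) (M (Lw @ nwt t @ Rw))) Tr) = 0" using z P by simp
  have hvld: "\<exists>c' u' d'. vld c' u' d' \<and> h t = nw c' u' d'" if tT: "t \<in> Tr" for t
  proof (cases "Cd t")
    case True
    obtain c u d where t: "t = (c,u,d)" by (cases t) auto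
    have v1: "vld c u d" using Trp tT t by blast
    have "path (drop (length \<alpha>) c) u" using pto_append[of E1 s r "take (length \<alpha>) c" "drop (length \<alpha>) c" u] v1
      by (simp add: vld_def)
    moreover have "path (drop (length \<beta>) d) u" using pto_append[of E1 s r "take (length \<beta>) d" "drop (length \<beta>) d" u] v1
      by (simp add: vld_def)
    ultimately show ?thesis using True v1 t by (auto simp: h_def vld_def)
  next
    case False
    then show ?thesis using vE by (intro exI[of _ "[]"] exI[of _ v]) (auto simp: h_def vld_def nw_def)
  qed
  have hG: "h t \<noteq> [] \<and> set (h t) \<subseteq> GG" if "t \<in> Tr" for t using hvld[OF that] set_nw nw_ne by metis
  have EQ: "eqv (psum (\<lambda>t. psmul (q (nwt t)) (M (Lw @ nwt t @ Rw))) Tr) (psum (\<lambda>t. psmul (a t) (M (h t))) Tr)"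
  proof (rule eqv_psum[OF finT])
    fix t assume tT: "t \<in> Tr"
    obtain c u d where t: "t = (c,u,d)" by (cases t) auto
    have tp: "vld c u d" "length \<beta> \<le> length d" "length \<alpha> \<le> length c" using Trp tT t by auto
    have R: "if Cd t then eqv (M (Lw @ nwt t @ Rw)) (M (h t)) else M (Lw @ nwt t @ Rw) \<in> II"
      using RED[OF t0 tp(1) tp(3) tp(2)] t by (simp add: Cd_def h_def nwt_def Lw_def Rw_def)
    show "eqv (psmul (q (nwt t)) (M (Lw @ nwt t @ Rw))) (psmul (a t) (M (h t)))"
    proof (cases "Cd t")
      case True then show ?thesis using R by (simp add: a_def eqv_psmul)
    next
      case False
      then have "M (Lw @ nwt t @ Rw) \<in> II" using R by simp
      then have "psmul (q (nwt t)) (M (Lw @ nwt t @ Rw)) \<in> II" by (rule cohn_ideal.smul)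
      then show ?thesis using False by (simp add: a_def eqv_zero_I)
    qed
  qed
  have fY1: "psum (\<lambda>t. psmul (q (nwt t)) (M (Lw @ nwt t @ Rw))) Tr \<in> FF"
    using finT LwG RwG by (intro free_psum free_psmul freeM) (auto simp: nwt_def Tr_def nw_ne dest: set_nw)
  have fY2: "psum (\<lambda>t. psmul (a t) (M (h t))) Tr \<in> FF"
    using finT hG by (intro free_psum free_psmul freeM) auto
  have phiY: "\<phi> (psum (\<lambda>t. psmul (a t) (M (h t))) Tr) = 0"
    using phi_eqv[OF fY1 fY2 EQ] phiP by simp
  define F0 where "F0 = (\<lambda>t. hd (drop (length \<beta>) (snd (snd t)))) ` Tr"
  have finF0: "finite F0" using finT by (simp add: F0_def)
  have ST: "\<exists>w0 f. h t = w0 @ [Gh f] \<and> w0 \<noteq> [] \<and> f \<in> E1 \<and> s f = v \<and> f \<in> F0 \<and> m < length (snd (snd t))"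
    if tT: "t \<in> Tr" and at: "a t \<noteq> 0" and ht: "h t \<noteq> [Vx v]" for t
  proof -
    obtain c u d where t: "t = (c,u,d)" by (cases t) auto
    have tp: "vld c u d" "length \<beta> \<le> length d" "length \<alpha> \<le> length c"
       "int (length c) - int (length d) = int (length \<alpha>) - int (length \<beta>)" using Trp tT t by auto
    have C: "Cd t" using at by (simp add: a_def split: if_splits)
    define c' where "c' = drop (length \<alpha>) c"
    define d' where "d' = drop (length \<beta>) d"
    have lens: "length c' = length d'" using tp by (simp add: c'_def d'_def)
    have hd: "h t = nw c' u d'" using C t by (simp add: h_def c'_def d'_def)
    have vsc: "vs v c' u" and vsd: "vs v d' u" using C t by (simp_all add: Cd_def c'_def d'_def)
    have pd': "path d' u" using pto_append[of E1 s r "take (length \<beta>) d" d' u] tp(1)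
      by (simp add: vld_def d'_def)
    show ?thesis
    proof (cases d')
      case Nil
      then have "c' = []" using lens by simp
      then have "h t = [Vx v]" using hd Nil vsc by (simp add: nw_def vs_def)
      then show ?thesis using ht by simp
    next
      case (Cons f d'')
      have "h t = (ew c' @ Vx u # gw d'') @ [Gh f]" using hd Cons by (simp add: nw_def)
      moreover have "f \<in> E1" using pd' Cons by simp
      moreover have "s f = v" using vsd Cons by (simp add: vs_def)
      moreover have "f \<in> F0" using tT t Cons by (force simp: F0_def d'_def)
      moreover have "m < length d"
      proof -
        have "drop (length \<beta>) d \<noteq> []" using Cons by (simp add: d'_def)
        then show ?thesis using bm by simp
      qed
      ultimately show ?thesis using t by auto
    qed
  qed
  have MAIN: "\<exists>tt. (\<forall>t\<in>Tr. a t \<noteq> 0 \<longrightarrow> h t \<noteq> [Vx v] \<longrightarrow> (\<exists>w0 g. h t = w0 @ [g] \<and> w0 \<noteq> [] \<and> \<phi> (M [g]) * tt = 0))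
      \<and> \<phi> (M [Vx v]) * tt \<noteq> 0"
  proof (cases "\<forall>t\<in>Tr. a t \<noteq> 0 \<longrightarrow> h t = [Vx v]")
    case True
    then show ?thesis using V_nz[OF vE] by blast
  next
    case False
    then obtain t1 where t1: "t1 \<in> Tr" "a t1 \<noteq> 0" "h t1 \<noteq> [Vx v]" by blast
    obtain w1 f1 where f1: "f1 \<in> E1" "s f1 = v" "m < length (snd (snd t1))" using ST[OF t1] by blast
    have vX: "v \<notin> X"
    proof
      assume "v \<in> X"
      then have "\<forall>a u b. vld a u b \<longrightarrow> q (nw a u b) \<noteq> 0 \<longrightarrow> length b \<le> m" using side by blast
      moreover have "vld (fst t1) (fst (snd t1)) (snd (snd t1))" "q (nw (fst t1) (fst (snd t1)) (snd (snd t1))) \<noteq> 0"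
        using t1 by (auto simp: Tr_def nwt_def)
      ultimately show False using f1 by fastforce
    qed
    show ?thesis
    proof (cases "v \<in> reg_vertices E0 E1 s")
      case True
      from MULT_Y[OF True vX] show ?thesis using ST by (intro exI[of _ "\<phi> (gap_elt E1 s v)"]) fastforce
    next
      case False
      have "{e\<in>E1. s e = v} \<noteq> {}" using f1 by blast
      then have inf: "infinite {e\<in>E1. s e = v}" using False vE by (auto simp: reg_vertices_def)
      have "infinite ({e\<in>E1. s e = v} - F0)" using Diff_infinite_finite[OF finF0 inf] .
      then obtain f0 where f0: "f0 \<in> {e\<in>E1. s e = v}" "f0 \<notin> F0"
        using infinite_imp_nonempty by blast
      then have f0E: "f0 \<in> E1" and sf0: "s f0 = v" by auto
      have "\<forall>t\<in>Tr. a t \<noteq> 0 \<longrightarrow> h t \<noteq> [Vx v] \<longrightarrow> (\<exists>w0 g. h t = w0 @ [g] \<and> w0 \<noteq> [] \<and> \<phi> (M [g]) * \<phi> (M [Ed f0]) = 0)"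
      proof (intro ballI impI)
        fix t assume "t \<in> Tr" "a t \<noteq> 0" "h t \<noteq> [Vx v]"
        then obtain w0 f where "h t = w0 @ [Gh f]" "w0 \<noteq> []" "f \<in> E1" "f \<in> F0" using ST by blast
        moreover have "f \<noteq> f0" using f0 \<open>f \<in> F0\<close> by auto
        ultimately show "\<exists>w0 g. h t = w0 @ [g] \<and> w0 \<noteq> [] \<and> \<phi> (M [g]) * \<phi> (M [Ed f0]) = 0"
          using MULT_INF[OF f0E] by blast
      qed
      then show ?thesis using MULT_INF[OF f0E] sf0 by blast
    qed
  qed
  then obtain tt where tt1: "\<forall>t\<in>Tr. a t \<noteq> 0 \<longrightarrow> h t \<noteq> [Vx v] \<longrightarrow> (\<exists>w0 g. h t = w0 @ [g] \<and> w0 \<noteq> [] \<and> \<phi> (M [g]) * tt = 0)"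
    and tt2: "\<phi> (M [Vx v]) * tt \<noteq> 0" by blast
  have S0: "(\<Sum>t\<in>{t\<in>Tr. h t = [Vx v]}. a t) = 0"
    using K1[OF finT hG phiY vE _ tt2] tt1 by blast
  define t0' where "t0' = (\<alpha>, v, \<beta>)"
  have t0T: "t0' \<in> Tr" using t0 c0 by (simp add: Tr_def t0'_def nwt_def)
  have Cd0: "Cd t0'" by (simp add: Cd_def t0'_def vs_def)
  have h0: "h t0' = [Vx v]" using Cd0 by (simp add: h_def t0'_def nw_def)
  have uniq: "t = t0'" if "t \<in> Tr" "h t = [Vx v]" "a t \<noteq> 0" for t
  proof -
    obtain c u d where t: "t = (c,u,d)" by (cases t) auto
    have C: "Cd t" using that by (simp add: a_def split: if_splits)
    have "nw (drop (length \<alpha>) c) u (drop (length \<beta>) d) = nw [] v []" using that C t by (simp add: h_def nw_def)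
    note ni = nw_inj[OF this]
    then have "drop (length \<alpha>) c = []" "u = v" "drop (length \<beta>) d = []" by simp_all
    moreover have "take (length \<alpha>) c = \<alpha>" "take (length \<beta>) d = \<beta>" using C t by (simp_all add: Cd_def)
    ultimately show ?thesis using t by (metis append_Nil2 append_take_drop_id t0'_def)
  qed
  have "(\<Sum>t\<in>{t\<in>Tr. h t = [Vx v]}. a t) = (\<Sum>t\<in>{t0'}. a t)"
  proof (rule sum.mono_neutral_right)
    show "finite {t\<in>Tr. h t = [Vx v]}" using finT by simp
    show "{t0'} \<subseteq> {t\<in>Tr. h t = [Vx v]}" using t0T h0 by simp
    show "\<forall>i\<in>{t\<in>Tr. h t = [Vx v]} - {t0'}. a i = 0" using uniq by blast
  qed
  also have "\<dots> = q (nw \<alpha> v \<beta>)" using Cd0 by (simp add: a_def t0'_def nwt_def)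
  finally show False using S0 c0 by simp
qed

end

context mainloc begin

lemma finSv: "v \<in> X \<Longrightarrow> finite {e\<in>E1. s e = v}"
  using X by (auto simp: reg_vertices_def)

lemma EXPAND1:
  assumes vX: "v \<in> X" and va: "vld a v b"
  shows "eqv (M (nw a v b)) (psum (\<lambda>e. M (nw (a @ [e]) (r e) (b @ [e]))) {e\<in>E1. s e = v})"
proof -
  let ?Sv = "{e\<in>E1. s e = v}"
  have pa: "path a v" and pb: "path b v" using va by (auto simp: vld_def)
  have Ga: "set (ew a) \<subseteq> GG" and Gb: "set (gw b) \<subseteq> GG" using set_ew[OF pa] set_gw[OF pb] .
  have "eqv (pmul (pmul (M (ew a)) (M [Vx v])) (M (gw b))) (pmul (pmul (M (ew a)) (psum (\<lambda>e. M [Ed e, Gh e]) ?Sv)) (M (gw b)))"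
    using eqv_ctx[OF R_X[OF vX] Ga Gb] .
  then have h1: "eqv (M (nw a v b)) (psum (\<lambda>e. M (ew a @ [Ed e, Gh e] @ gw b)) ?Sv)"
    by (simp add: mon_mul pmul_psum_left pmul_psum_right nw_def)
  have h2: "eqv (psum (\<lambda>e. M (ew a @ [Ed e, Gh e] @ gw b)) ?Sv) (psum (\<lambda>e. M (nw (a @ [e]) (r e) (b @ [e]))) ?Sv)"
  proof (rule eqv_psum[OF finSv[OF vX]])
    fix e assume e: "e \<in> ?Sv"
    have "eqv (M ((ew a @ [Ed e]) @ [] @ [Gh e] @ gw b)) (M ((ew a @ [Ed e]) @ [Vx (r e)] @ [Gh e] @ gw b))"
    proof -
      have "eqv (M (ew a @ [Ed e, Vx (r e)] @ (Gh e # gw b))) (M (ew a @ [Ed e] @ (Gh e # gw b)))"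
        using R_Er[of e] e Ga Gb by (intro ctxE) auto
      then show ?thesis by (simp add: eqv_sym)
    qed
    then show "eqv (M (ew a @ [Ed e, Gh e] @ gw b)) (M (nw (a @ [e]) (r e) (b @ [e])))"
      by (simp add: nw_def)
  qed
  show ?thesis by (rule eqv_trans[OF h1 h2])
qed


lemma nw_memG: "vld a v b \<Longrightarrow> x \<in> set (nw a v b) \<Longrightarrow> x \<in> GG" using set_nw by blast

lemma vld_ext: "vld a u b \<Longrightarrow> e \<in> E1 \<Longrightarrow> s e = u \<Longrightarrow> vld (a @ [e]) (r e) (b @ [e])"
  by (simp add: vld_def pto_snoc rE0)

lemma STEPM:
  assumes qF: "q \<in> FF" and qN: "\<forall>w. q w \<noteq> 0 \<longrightarrow> w \<in> NW" and hom: "homogeneous dd q" and z: "\<phi> q = 0"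
    and bnd: "\<forall>a u b. vld a u b \<longrightarrow> q (nw a u b) \<noteq> 0 \<longrightarrow> m \<le> length b \<and> length b \<le> N" and mN: "m < N"
  shows "\<exists>q'. q' \<in> FF \<and> (\<forall>w. q' w \<noteq> 0 \<longrightarrow> w \<in> NW) \<and> homogeneous dd q' \<and> eqv q q' \<and>
     (\<forall>a u b. vld a u b \<longrightarrow> q' (nw a u b) \<noteq> 0 \<longrightarrow> Suc m \<le> length b \<and> length b \<le> N)"
proof -
  define Tr where "Tr = {t. vld (fst t) (fst (snd t)) (snd (snd t)) \<and> q (nwt t) \<noteq> 0}"
  have finT: "finite Tr" and qrep: "q = psum (\<lambda>t. psmul (q (nwt t)) (M (nwt t))) Tr"
    unfolding Tr_def by (rule rep_triples(1)[OF qF qN], rule rep_triples(2)[OF qF qN])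
  define XT where "XT = {t\<in>Tr. length (snd (snd t)) = m \<and> fst (snd t) \<in> X}"
  define ex where "ex t = psum (\<lambda>e. M (nw (fst t @ [e]) (r e) (snd (snd t) @ [e]))) {e\<in>E1. s e = fst (snd t)}" for t
  define A where "A = psum (\<lambda>t. psmul (q (nwt t)) (M (nwt t))) (Tr - XT)"
  define B where "B = psum (\<lambda>t. psmul (q (nwt t)) (M (nwt t))) XT"
  define B' where "B' = psum (\<lambda>t. psmul (q (nwt t)) (ex t)) XT"
  define q' where "q' = padd A B'"
  have XT: "XT \<subseteq> Tr" by (auto simp: XT_def)
  have finXT: "finite XT" using finT XT by (rule finite_subset[rotated])
  have trT: "vld (fst t) (fst (snd t)) (snd (snd t)) \<and> q (nwt t) \<noteq> 0" if "t \<in> Tr" for t using that by (simp add: Tr_def)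
  have split: "psum (\<lambda>t. psmul (q (nwt t)) (M (nwt t))) Tr = padd A B"
    unfolding A_def B_def by (rule ext) (simp add: psum_apply padd_apply sum.subset_diff[OF XT finT])
  have eB: "eqv B B'"
    unfolding B_def B'_def
  proof (rule eqv_psum[OF finXT])
    fix t assume tX: "t \<in> XT"
    then have "fst (snd t) \<in> X" "vld (fst t) (fst (snd t)) (snd (snd t))" using trT XT by (auto simp: XT_def)
    then show "eqv (psmul (q (nwt t)) (M (nwt t))) (psmul (q (nwt t)) (ex t))"
      unfolding ex_def nwt_def by (intro eqv_psmul EXPAND1)
  qed
  have "eqv (padd A B) q'" unfolding q'_def by (rule eqv_padd[OF eqv_refl eB])
  then have eq: "eqv q q'" using split by (subst qrep) simp
  have fA: "A \<in> FF" unfolding A_def using finT trT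
    by (intro free_psum free_psmul freeM) (auto simp: nwt_def nw_ne intro: nw_memG)
  have vx: "vld (fst t @ [e]) (r e) (snd (snd t) @ [e])" if "t \<in> XT" "e \<in> E1" "s e = fst (snd t)" for t e
    using vld_ext trT XT that by blast
  have XX: "fst (snd t) \<in> X" if "t \<in> XT" for t using that by (simp add: XT_def)
  have fB': "B' \<in> FF" unfolding B'_def ex_def using finXT
    by (intro free_psum free_psmul freeM) (auto simp: nw_ne intro: nw_memG[OF vx] finSv[OF XX])
  have fq': "q' \<in> FF" unfolding q'_def using fA fB' by (rule free_padd)
  have SUPP: "(\<exists>t\<in>Tr - XT. w = nwt t) \<or> (\<exists>t\<in>XT. \<exists>e\<in>E1. s e = fst (snd t) \<and> w = nw (fst t @ [e]) (r e) (snd (snd t) @ [e]))"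
    if nz: "q' w \<noteq> 0" for w
  proof (rule ccontr)
    assume ne: "\<not> ?thesis"
    have "A w = 0" unfolding A_def psum_apply using ne by (intro sum.neutral) (auto simp: psmul_apply mon_apply)
    moreover have "B' w = 0" unfolding B'_def psum_apply
    proof (intro sum.neutral ballI)
      fix t assume "t \<in> XT"
      then have "ex t w = 0" unfolding ex_def psum_apply using ne by (intro sum.neutral) (auto simp: mon_apply)
      then show "psmul (q (nwt t)) (ex t) w = 0" by (simp add: psmul_apply)
    qed
    ultimately show False using nz by (simp add: q'_def padd_apply)
  qed
  have GOOD: "w \<in> NW \<and> wdeg w = dd \<and> (\<forall>a u b. w = nw a u b \<longrightarrow> Suc m \<le> length b \<and> length b \<le> N)"
    if nz: "q' w \<noteq> 0" for w
  proof -
    from SUPP[OF nz] show ?thesis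
    proof
      assume "\<exists>t\<in>Tr - XT. w = nwt t"
      then obtain a u b where t: "(a,u,b) \<in> Tr" "(a,u,b) \<notin> XT" "w = nw a u b" by (auto simp: nwt_def)
      have v: "vld a u b" and qz: "q (nw a u b) \<noteq> 0" using trT[OF t(1)] by (auto simp: nwt_def)
      have b: "m \<le> length b" "length b \<le> N" using bnd v qz by auto
      have "length b \<noteq> m"
      proof
        assume bm: "length b = m"
        then have uX: "u \<notin> X" using t by (auto simp: XT_def)
        have "q (nw a u b) = 0"
          using KILL[OF qF qN hom z _ v bm] bnd uX by blast
        then show False using qz by simp
      qed
      then have "Suc m \<le> length b" using b by simp
      moreover have "wdeg w = dd" using hom qz t by (simp add: homogeneous_def)
      moreover have "w \<in> NW" using v t by (auto simp: NW_def)
      ultimately show ?thesis using t b by (auto dest: nw_inj)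
    next
      assume "\<exists>t\<in>XT. \<exists>e\<in>E1. s e = fst (snd t) \<and> w = nw (fst t @ [e]) (r e) (snd (snd t) @ [e])"
      then obtain a u b e where t: "(a,u,b) \<in> XT" "e \<in> E1" "s e = u" "w = nw (a @ [e]) (r e) (b @ [e])" by auto
      have v: "vld a u b" and qz: "q (nw a u b) \<noteq> 0" and bm: "length b = m"
        using trT t(1) XT by (auto simp: nwt_def XT_def)
      have v': "vld (a @ [e]) (r e) (b @ [e])" using vld_ext[OF v t(2) t(3)] .
      have "wdeg (nw a u b) = dd" using hom qz by (simp add: homogeneous_def)
      then have "wdeg w = dd" using t by (simp add: wdeg_nw)
      moreover have "w \<in> NW" using v' t by (auto simp: NW_def)
      ultimately show ?thesis using t bm mN by (auto dest: nw_inj)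
    qed
  qed
  have "\<forall>w. q' w \<noteq> 0 \<longrightarrow> w \<in> NW" using GOOD by blast
  moreover have "homogeneous dd q'" using GOOD by (simp add: homogeneous_def)
  moreover have "\<forall>a u b. vld a u b \<longrightarrow> q' (nw a u b) \<noteq> 0 \<longrightarrow> Suc m \<le> length b \<and> length b \<le> N" using GOOD by blast
  ultimately show ?thesis using fq' eq by blast
qed

end

context mainloc begin

lemma BASE:
  assumes qF: "q \<in> FF" and qN: "\<forall>w. q w \<noteq> 0 \<longrightarrow> w \<in> NW" and hom: "homogeneous dd q" and z: "\<phi> q = 0"
    and bnd: "\<forall>a u b. vld a u b \<longrightarrow> q (nw a u b) \<noteq> 0 \<longrightarrow> length b = N"
  shows "q = Z"
proof (rule ext)
  fix w
  show "q w = Z w"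
  proof (rule ccontr)
    assume nz: "q w \<noteq> Z w"
    then have "w \<in> NW" using qN by (simp add: pzero_apply)
    then obtain a u b where v: "vld a u b" and w: "w = nw a u b" by (auto simp: NW_def)
    have qz: "q (nw a u b) \<noteq> 0" using nz w by (simp add: pzero_apply)
    have "q (nw a u b) = 0"
    proof (rule KILL[OF qF qN hom z _ v])
      show "\<forall>a u b. vld a u b \<longrightarrow> q (nw a u b) \<noteq> 0 \<longrightarrow> N \<le> length b" using bnd by simp
      show "length b = N" using bnd v qz by simp
      show "u \<notin> X \<or> (\<forall>a u b. vld a u b \<longrightarrow> q (nw a u b) \<noteq> 0 \<longrightarrow> length b \<le> N)" using bnd by simp
    qed
    then show False using qz by simp
  qed
qed

lemma CORE_j:
  "\<forall>q. q \<in> FF \<and> (\<forall>w. q w \<noteq> 0 \<longrightarrow> w \<in> NW) \<and> homogeneous dd q \<and> \<phi> q = 0 \<and>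
     (\<forall>a u b. vld a u b \<longrightarrow> q (nw a u b) \<noteq> 0 \<longrightarrow> N \<le> length b + j \<and> length b \<le> N) \<longrightarrow> q \<in> II"
proof (induction j)
  case 0
  show ?case
  proof (intro allI impI)
    fix q assume h: "q \<in> FF \<and> (\<forall>w. q w \<noteq> 0 \<longrightarrow> w \<in> NW) \<and> homogeneous dd q \<and> \<phi> q = 0 \<and>
     (\<forall>a u b. vld a u b \<longrightarrow> q (nw a u b) \<noteq> 0 \<longrightarrow> N \<le> length b + 0 \<and> length b \<le> N)"
    then have "q = Z" using BASE[of q dd N] by fastforce
    then show "q \<in> II" by (simp add: cohn_ideal.zero)
  qed
next
  case (Suc j)
  show ?case
  proof (intro allI impI)
    fix q assume h: "q \<in> FF \<and> (\<forall>w. q w \<noteq> 0 \<longrightarrow> w \<in> NW) \<and> homogeneous dd q \<and> \<phi> q = 0 \<and>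
     (\<forall>a u b. vld a u b \<longrightarrow> q (nw a u b) \<noteq> 0 \<longrightarrow> N \<le> length b + Suc j \<and> length b \<le> N)"
    show "q \<in> II"
    proof (cases "N \<le> j")
      case True
      then show ?thesis using Suc.IH h by fastforce
    next
      case False
      define m where "m = N - Suc j"
      have mN: "m < N" using False by (simp add: m_def)
      have bnd: "\<forall>a u b. vld a u b \<longrightarrow> q (nw a u b) \<noteq> 0 \<longrightarrow> m \<le> length b \<and> length b \<le> N"
      proof (intro allI impI)
        fix a u b assume "vld a u b" "q (nw a u b) \<noteq> 0"
        then have "N \<le> length b + Suc j \<and> length b \<le> N" using h by blast
        then show "m \<le> length b \<and> length b \<le> N" unfolding m_def by linarith
      qed
      obtain q' where q': "q' \<in> FF" "\<forall>w. q' w \<noteq> 0 \<longrightarrow> w \<in> NW" "homogeneous dd q'" "eqv q q'"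
        "\<forall>a u b. vld a u b \<longrightarrow> q' (nw a u b) \<noteq> 0 \<longrightarrow> Suc m \<le> length b \<and> length b \<le> N"
        using STEPM[of q dd m N] h bnd mN by blast
      have "\<phi> q' = 0" using phi_eqv[of q q'] h q' by simp
      moreover have "\<forall>a u b. vld a u b \<longrightarrow> q' (nw a u b) \<noteq> 0 \<longrightarrow> N \<le> length b + j \<and> length b \<le> N"
      proof (intro allI impI)
        fix a u b assume "vld a u b" "q' (nw a u b) \<noteq> 0"
        then have "Suc m \<le> length b \<and> length b \<le> N" using q'(5) by blast
        then show "N \<le> length b + j \<and> length b \<le> N" using False unfolding m_def by linarith
      qed
      ultimately have "q' \<in> II" using Suc.IH q' by blast
      then show ?thesis using eqv_I q'(4) by blast
    qed
  qed
qed

lemma CORE: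
  assumes qF: "q \<in> FF" and qN: "\<forall>w. q w \<noteq> 0 \<longrightarrow> w \<in> NW" and hom: "homogeneous dd q" and z: "\<phi> q = 0"
  shows "q \<in> II"
proof -
  define Tr where "Tr = {t. vld (fst t) (fst (snd t)) (snd (snd t)) \<and> q (nwt t) \<noteq> 0}"
  have finT: "finite Tr" unfolding Tr_def by (rule rep_triples(1)[OF qF qN])
  have "finite ((\<lambda>t. length (snd (snd t))) ` Tr)" using finT by simp
  then obtain N where N: "\<forall>x\<in>(\<lambda>t. length (snd (snd t))) ` Tr. x \<le> N"
    using finite_nat_set_iff_bounded_le by blast
  have "\<forall>a u b. vld a u b \<longrightarrow> q (nw a u b) \<noteq> 0 \<longrightarrow> N \<le> length b + N \<and> length b \<le> N"
  proof (intro allI impI conjI)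
    fix a u b assume "vld a u b" "q (nw a u b) \<noteq> 0"
    then have "(a,u,b) \<in> Tr" by (simp add: Tr_def nwt_def)
    then show "length b \<le> N" using N by force
  qed simp
  then show ?thesis using CORE_j[of dd N N] qF qN hom z by blast
qed

definition restr :: "('k,'v,'e) fpoly \<Rightarrow> int \<Rightarrow> ('k,'v,'e) fpoly" where
  "restr q d = (\<lambda>w. if wdeg w = d then q w else 0)"

theorem main_loc:
  assumes pF: "p \<in> FF" and z: "\<phi> p = 0"
  shows "p \<in> II"
proof -
  obtain p' where p': "p' \<in> FF" "eqv p p'" "\<forall>w. p' w \<noteq> 0 \<longrightarrow> w \<in> NW" using NORM[OF pF] by blast
  have zp': "\<phi> p' = 0" using phi_eqv[OF pF p'(1) p'(2)] z by simp
  define D where "D = wdeg ` {w. p' w \<noteq> 0}"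
  have finS: "finite {w. p' w \<noteq> 0}" using p'(1) by (simp add: free_iff)
  then have finD: "finite D" by (simp add: D_def)
  have rF: "restr p' d \<in> FF" for d
    using p'(1) unfolding free_iff restr_def by (auto intro: finite_subset[OF _ finS])
  have rN: "\<forall>w. restr p' d w \<noteq> 0 \<longrightarrow> w \<in> NW" for d using p'(3) by (simp add: restr_def)
  have rH: "homogeneous d (restr p' d)" for d by (simp add: homogeneous_def restr_def)
  have rep: "p' = psum (restr p') D"
  proof (rule ext)
    fix w
    show "p' w = psum (restr p') D w"
    proof (cases "p' w = 0")
      case True
      have "psum (restr p') D w = 0" unfolding psum_apply restr_def using True by (intro sum.neutral) simp
      then show ?thesis using True by simp
    next
      case False
      then have "wdeg w \<in> D" by (simp add: D_def)
      then show ?thesis using finD by (simp add: psum_apply restr_def sum.delta')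
    qed
  qed
  have "\<phi> p' = (\<Sum>d\<in>D. \<phi> (restr p' d))" by (subst rep) (rule phi_psum[OF finD rF])
  then have s0: "(\<Sum>d\<in>D. \<phi> (restr p' d)) = 0" using zp' by simp
  have inA: "\<forall>d\<in>D. \<phi> (restr p' d) \<in> Agr d" using graded rF rH by blast
  have G4: "\<forall>S c. finite S \<longrightarrow> (\<forall>n\<in>S. c n \<in> Agr n) \<longrightarrow> (\<Sum>n\<in>S. c n) = 0 \<longrightarrow> (\<forall>n\<in>S. c n = 0)"
    using A unfolding graded_ring_def by (elim conjE) assumption
  have "\<forall>d\<in>D. \<phi> (restr p' d) = 0"
    using spec[OF spec[OF G4, of D], of "\<lambda>d. \<phi> (restr p' d)"] finD inA s0 by simp
  then have "\<forall>d\<in>D. restr p' d \<in> II" using CORE[OF rF rN rH] by blast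
  then have "psum (restr p') D \<in> II" using finD by (intro I_psum) auto
  then have "p' \<in> II" using rep by simp
  then show ?thesis using eqv_I[OF p'(2)] by simp
qed

end

theorem mainTheorem4:
  fixes E0 :: "'v set" and E1 :: "'e set" and s r :: "'e \<Rightarrow> 'v" and X :: "'v set"
    and Agr :: "int \<Rightarrow> 'a::ring set"
    and \<phi> :: "('k::field,'v,'e) fpoly \<Rightarrow> 'a"
  assumes graph: "cgraph E0 E1 s r"
    and X: "X \<subseteq> reg_vertices E0 E1 s"
    and A: "graded_ring Agr"
    and hom_add: "\<forall>p\<in>cohn_free E0 E1. \<forall>q\<in>cohn_free E0 E1. \<phi> (padd p q) = \<phi> p + \<phi> q"
    and hom_mul: "\<forall>p\<in>cohn_free E0 E1. \<forall>q\<in>cohn_free E0 E1. \<phi> (pmul p q) = \<phi> p * \<phi> q"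
    and hom_rel: "\<forall>p\<in>cohn_ideal E0 E1 s r X. \<phi> p = 0"
    and graded: "\<forall>n. \<forall>p\<in>cohn_free E0 E1. homogeneous n p \<longrightarrow> \<phi> p \<in> Agr n"
    and vert: "\<forall>u\<in>E0. \<phi> (mon [Vx u]) \<noteq> 0"
    and Y: "\<forall>v\<in>reg_vertices E0 E1 s - X. \<phi> (gap_elt E1 s v) \<noteq> 0"
  shows "\<forall>p\<in>cohn_free E0 E1. \<phi> p = 0 \<longrightarrow> p \<in> cohn_ideal E0 E1 s r X"
proof -
  interpret mainloc E0 E1 s r X "TYPE('k)" Agr \<phi>
    using graph X A hom_add hom_mul hom_rel graded vert Y by unfold_locales assumption+
  show ?thesis using main_loc by blast
qed

end
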